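(* Let $(\mathbf L,\mathbf R)$ and $(\mathbf L',\mathbf R')$ be two pairs ($k\times n$ and $n\times k$, entries in a field $K$) with all maximal minors of $\mathbf R$ and of $\mathbf R'$ nonzero and with the same minor products: $h(\mathcal J):=\Delta_{\mathbf L}(\mathcal J)\Delta_{\mathbf R}(\mathcal J)=\Delta_{\mathbf L'}(\mathcal J)\Delta_{\mathbf R'}(\mathcal J)$ for all $\mathcal J\in\wp_k[n]$. Fix $\mathcal I\in\wp_k[n]$ with $h(\mathcal I)\ne0$, and suppose there exists an observable set $\chi(\mathcal I\mid^{ij}_{\alpha\beta})$ whose polynomial $F^{ij}_{\alpha\beta}$ has two distinct roots. If $Y_{\mathbf R}(\mathcal I)^{ij}_{\alpha\beta}=Y_{\mathbf R'}(\mathcal I)^{ij}_{\alpha\beta}$, then $Y_{\mathbf R}(\mathcal I)^{lm}_{\gamma\delta}=Y_{\mathbf R'}(\mathcal I)^{lm}_{\gamma\delta}$ for all distinct $l,m\in\mathcal I$ and distinct $\gamma,\delta\in\mathcal I^{\mathtt C}$ such that $\chi(\mathcal I\mid^{lm}_{\gamma\delta})$ is observable. That is, given the family $\{h(\mathcal J)\}$, the choice of one root of $F^{ij}_{\alpha\beta}$ as the value of $Y^{ij}_{\alpha\beta}$ determines all Y-terms with basis $\mathcal I$ associated with observable sets.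
   Context: $[n]=\{1,\dots,n\}$, $\wp_k[n]$ the $k$-subsets. For $\mathcal I\in\wp_k[n]$: $\mathcal I^{\mathtt C}=[n]\setminus\mathcal I$; $\mathcal I^i_\alpha=(\mathcal I\setminus\{i\})\cup\{\alpha\}$; $\mathcal I^{ij}_{\alpha\beta}=(\mathcal I\setminus\{i,j\})\cup\{\alpha,\beta\}$. Maximal minors: columns for $k\times n$, rows for $n\times k$ matrices. For an $n\times k$ matrix $\mathbf R$ with nonzero maximal minors, $Y_{\mathbf R}(\mathcal I)^{ij}_{\alpha\beta}:=-\mathrm{sign}[(i-\alpha)(i-\beta)(j-\alpha)(j-\beta)]\frac{\Delta_{\mathbf R}(\mathcal I^i_\alpha)\Delta_{\mathbf R}(\mathcal I^j_\beta)}{\Delta_{\mathbf R}(\mathcal I^i_\beta)\Delta_{\mathbf R}(\mathcal I^j_\alpha)}$ (distinct $i,j\in\mathcal I$, distinct $\alpha,\beta\in\mathcal I^{\mathtt C}$). $\chi(\mathcal I\mid^{ij}_{\alpha\beta}):=\{h(\mathcal I)h(\mathcal I^{ij}_{\alpha\beta}),h(\mathcal I^i_\alpha)h(\mathcal I^j_\beta),h(\mathcal I^i_\beta)h(\mathcal I^j_\alpha)\}$ (multiset), observable if not all entries are $0$. $A^{ij}_{\alpha\beta}:=h(\mathcal I)h(\mathcal I^{ij}_{\alpha\beta})-h(\mathcal I^i_\alpha)h(\mathcal I^j_\beta)-h(\mathcal I^i_\beta)h(\mathcal I^j_\alpha)$ and $F^{ij}_{\alpha\beta}(X):=h(\mathcal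 I^i_\beta)h(\mathcal I^j_\alpha)X^2-A^{ij}_{\alpha\beta}X+h(\mathcal I^i_\alpha)h(\mathcal I^j_\beta)$; one has $F^{ij}_{\alpha\beta}(Y_{\mathbf R}(\mathcal I)^{ij}_{\alpha\beta})=0$. *)

theory Defs
  imports "Jordan_Normal_Form.Determinant" "Jordan_Normal_Form.DL_Submatrix" "HOL-Library.Multiset"
begin

text \<open>Indices are 0-based: the ground set [n] is rendered as {0..<n}.\<close>

definition ksubsets :: "nat \<Rightarrow> nat \<Rightarrow> nat set set" where
  "ksubsets k n = {J. J \<subseteq> {0..<n} \<and> card J = k}"

text \<open>Maximal minors: columns J of a k x n matrix, rows J of an n x k matrix
  (selected in increasing order).\<close>
definition colMinor :: "'a::comm_ring_1 mat \<Rightarrow> nat set \<Rightarrow> 'a" where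
  "colMinor L J = det (submatrix L UNIV J)"

definition rowMinor :: "'a::comm_ring_1 mat \<Rightarrow> nat set \<Rightarrow> 'a" where
  "rowMinor R J = det (submatrix R J UNIV)"

definition swap1 :: "nat set \<Rightarrow> nat \<Rightarrow> nat \<Rightarrow> nat set" where
  "swap1 I i a = insert a (I - {i})"

definition swap2 :: "nat set \<Rightarrow> nat \<Rightarrow> nat \<Rightarrow> nat \<Rightarrow> nat \<Rightarrow> nat set" where
  "swap2 I i j a b = (I - {i, j}) \<union> {a, b}"

definition hprod :: "'a::comm_ring_1 mat \<Rightarrow> 'a mat \<Rightarrow> nat set \<Rightarrow> 'a" where
  "hprod L R J = colMinor L J * rowMinor R J"

definition Yterm :: "'a::field mat \<Rightarrow> nat set \<Rightarrow> nat \<Rightarrow> nat \<Rightarrow> nat \<Rightarrow> nat \<Rightarrow> 'a" where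
  "Yterm R I i j a b =
     - of_int (sgn ((int i - int a) * (int i - int b) * (int j - int a) * (int j - int b)))
     * (rowMinor R (swap1 I i a) * rowMinor R (swap1 I j b))
     / (rowMinor R (swap1 I i b) * rowMinor R (swap1 I j a))"

definition chi :: "(nat set \<Rightarrow> 'a::comm_ring_1) \<Rightarrow> nat set \<Rightarrow> nat \<Rightarrow> nat \<Rightarrow> nat \<Rightarrow> nat \<Rightarrow> 'a multiset" where
  "chi h I i j a b = {# h I * h (swap2 I i j a b),
                       h (swap1 I i a) * h (swap1 I j b),
                       h (swap1 I i b) * h (swap1 I j a) #}"

definition observable :: "'a::zero multiset \<Rightarrow> bool" where
  "observable M = (\<exists>x\<in>#M. x \<noteq> 0)"

definition Acoef :: "(nat set \<Rightarrow> 'a::comm_ring_1) \<Rightarrow> nat set \<Rightarrow> nat \<Rightarrow> nat \<Rightarrow> nat \<Rightarrow> nat \<Rightarrow> 'a" where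
  "Acoef h I i j a b = h I * h (swap2 I i j a b) - h (swap1 I i a) * h (swap1 I j b)
                       - h (swap1 I i b) * h (swap1 I j a)"

definition Fpoly :: "(nat set \<Rightarrow> 'a::comm_ring_1) \<Rightarrow> nat set \<Rightarrow> nat \<Rightarrow> nat \<Rightarrow> nat \<Rightarrow> nat \<Rightarrow> 'a \<Rightarrow> 'a" where
  "Fpoly h I i j a b X = h (swap1 I i b) * h (swap1 I j a) * X ^ 2 - Acoef h I i j a b * X
                         + h (swap1 I i a) * h (swap1 I j b)"

end

theory Submission
  imports Defs
begin


definition crr :: "(nat \<Rightarrow> nat \<Rightarrow> 'a::field) \<Rightarrow> nat \<Rightarrow> nat \<Rightarrow> nat \<Rightarrow> nat \<Rightarrow> 'a" where
  "crr f x y u v = f u x * f v y / (f v x * f u y)"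

definition obsL :: "(nat \<Rightarrow> nat \<Rightarrow> 'a::field) \<Rightarrow> nat \<Rightarrow> nat \<Rightarrow> nat \<Rightarrow> nat \<Rightarrow> bool" where
  "obsL l x y u v = (l u x \<noteq> 0 \<and> l v y \<noteq> 0 \<or> l v x \<noteq> 0 \<and> l u y \<noteq> 0)"

definition fullL :: "(nat \<Rightarrow> nat \<Rightarrow> 'a::field) \<Rightarrow> nat \<Rightarrow> nat \<Rightarrow> nat \<Rightarrow> nat \<Rightarrow> bool" where
  "fullL l x y u v = (l u x \<noteq> 0 \<and> l v y \<noteq> 0 \<and> l v x \<noteq> 0 \<and> l u y \<noteq> 0)"

locale core =
  fixes r r' l :: "nat \<Rightarrow> nat \<Rightarrow> 'a::field" and Is Os :: "nat set"
  assumes rnz: "\<And>x u. x \<in> Is \<Longrightarrow> u \<in> Os \<Longrightarrow> r u x \<noteq> 0"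
    and r'nz: "\<And>x u. x \<in> Is \<Longrightarrow> u \<in> Os \<Longrightarrow> r' u x \<noteq> 0"
    and opt: "\<And>x y u v. x \<in> Is \<Longrightarrow> y \<in> Is \<Longrightarrow> x \<noteq> y \<Longrightarrow> u \<in> Os \<Longrightarrow> v \<in> Os \<Longrightarrow> u \<noteq> v
       \<Longrightarrow> obsL l x y u v \<Longrightarrow> crr r' x y u v = crr r x y u v \<or> (fullL l x y u v \<and> crr r' x y u v = crr l x y u v)"
begin

definition dd where "dd x y u v = crr r' x y u v / crr r x y u v"
definition kk where "kk x y u v = crr l x y u v / crr r x y u v"

lemma dd_col: "x \<in> Is \<Longrightarrow> y \<in> Is \<Longrightarrow> u \<in> Os \<Longrightarrow> v \<in> Os \<Longrightarrow> w \<in> Os \<Longrightarrow> dd x y u v * dd x y v w = dd x y u w"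
  using rnz[of x u] rnz[of x v] rnz[of x w] rnz[of y u] rnz[of y v] rnz[of y w]
    r'nz[of x u] r'nz[of x v] r'nz[of x w] r'nz[of y u] r'nz[of y v] r'nz[of y w]
  by (simp add: dd_def crr_def field_simps)

lemma dd_row: "x \<in> Is \<Longrightarrow> y \<in> Is \<Longrightarrow> z \<in> Is \<Longrightarrow> u \<in> Os \<Longrightarrow> v \<in> Os \<Longrightarrow> dd x y u v * dd y z u v = dd x z u v"
  using rnz[of x u] rnz[of x v] rnz[of z u] rnz[of y u] rnz[of y v] rnz[of z v]
    r'nz[of x u] r'nz[of x v] r'nz[of z u] r'nz[of y u] r'nz[of y v] r'nz[of z v]
  by (simp add: dd_def crr_def field_simps)

lemma dd_refl_row: "x \<in> Is \<Longrightarrow> u \<in> Os \<Longrightarrow> v \<in> Os \<Longrightarrow> dd x x u v = 1"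
  using rnz[of x u] rnz[of x v] r'nz[of x u] r'nz[of x v]
  by (simp add: dd_def crr_def field_simps)

lemma dd_refl_col: "x \<in> Is \<Longrightarrow> y \<in> Is \<Longrightarrow> u \<in> Os \<Longrightarrow> dd x y u u = 1"
  using rnz[of x u] rnz[of y u] r'nz[of x u] r'nz[of y u]
  by (simp add: dd_def crr_def field_simps)

lemma dd_swc: "x \<in> Is \<Longrightarrow> y \<in> Is \<Longrightarrow> u \<in> Os \<Longrightarrow> v \<in> Os \<Longrightarrow> dd x y u v = 1 \<Longrightarrow> dd x y v u = 1"
  using dd_col[of x y u v u] dd_refl_col[of x y u] by auto

lemma dd_swr: "x \<in> Is \<Longrightarrow> y \<in> Is \<Longrightarrow> u \<in> Os \<Longrightarrow> v \<in> Os \<Longrightarrow> dd x y u v = 1 \<Longrightarrow> dd y x u v = 1"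
  using dd_row[of x y x u v] dd_refl_row[of x u v] by auto

lemma dd_one_iff: "x \<in> Is \<Longrightarrow> y \<in> Is \<Longrightarrow> u \<in> Os \<Longrightarrow> v \<in> Os \<Longrightarrow> dd x y u v = 1 \<longleftrightarrow> crr r' x y u v = crr r x y u v"
  using rnz[of x u] rnz[of x v] rnz[of y u] rnz[of y v] r'nz[of x u] r'nz[of x v] r'nz[of y u] r'nz[of y v]
  by (auto simp add: dd_def crr_def field_simps)

lemma rig: "x \<in> Is \<Longrightarrow> y \<in> Is \<Longrightarrow> x \<noteq> y \<Longrightarrow> u \<in> Os \<Longrightarrow> v \<in> Os \<Longrightarrow> u \<noteq> v
       \<Longrightarrow> obsL l x y u v \<Longrightarrow> \<not> fullL l x y u v \<Longrightarrow> dd x y u v = 1"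
  using opt dd_one_iff by blast

lemma dd_one_comb_c: "x \<in> Is \<Longrightarrow> y \<in> Is \<Longrightarrow> u \<in> Os \<Longrightarrow> v \<in> Os \<Longrightarrow> w \<in> Os \<Longrightarrow> dd x y u w = 1 \<Longrightarrow> dd x y v w = 1 \<Longrightarrow> dd x y u v = 1"
  using dd_col[of x y u w v] dd_swc[of x y v w] by auto

lemma dd_one_comb_r: "x \<in> Is \<Longrightarrow> y \<in> Is \<Longrightarrow> z \<in> Is \<Longrightarrow> u \<in> Os \<Longrightarrow> v \<in> Os \<Longrightarrow> dd x z u v = 1 \<Longrightarrow> dd y z u v = 1 \<Longrightarrow> dd x y u v = 1"
  using dd_row[of x z y u v] dd_swr[of y z u v] by auto

lemma bad_grid:
  assumes a: "a \<in> Is" and b: "b \<in> Is" and ab: "a \<noteq> b" and c: "c \<in> Os" and d: "d \<in> Os" and cd: "c \<noteq> d"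
    and full: "fullL l a b c d" and bad: "dd a b c d \<noteq> 1"
  shows "\<And>z w. z \<in> Is \<Longrightarrow> w \<in> Os \<Longrightarrow> l w z \<noteq> 0 \<Longrightarrow> (l c z \<noteq> 0 \<and> l d z \<noteq> 0) \<and> (l w a \<noteq> 0 \<and> l w b \<noteq> 0)"
    and "\<And>z w. z \<in> Is \<Longrightarrow> w \<in> Os \<Longrightarrow> l c z \<noteq> 0 \<Longrightarrow> l d z \<noteq> 0 \<Longrightarrow> l w a \<noteq> 0 \<Longrightarrow> l w b \<noteq> 0 \<Longrightarrow> l w z \<noteq> 0"
proof -
  have la: "l c a \<noteq> 0" "l d a \<noteq> 0" and lb: "l c b \<noteq> 0" "l d b \<noteq> 0" using full by (auto simp: fullL_def)
  have H1: "l w a \<noteq> 0 \<longleftrightarrow> l w b \<noteq> 0" if w: "w \<in> Os" "w \<noteq> c" "w \<noteq> d" for w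
  proof
    assume wa: "l w a \<noteq> 0"
    show "l w b \<noteq> 0"
    proof (rule ccontr)
      assume wb: "\<not> l w b \<noteq> 0"
      have "dd a b c w = 1" by (rule rig) (use a b ab c w wa wb la lb in \<open>auto simp: obsL_def fullL_def\<close>)
      moreover have "dd a b d w = 1" by (rule rig) (use a b ab d w wa wb la lb in \<open>auto simp: obsL_def fullL_def\<close>)
      ultimately have "dd a b c d = 1" using dd_one_comb_c a b c d w by blast
      with bad show False by simp
    qed
  next
    assume wb: "l w b \<noteq> 0"
    show "l w a \<noteq> 0"
    proof (rule ccontr)
      assume wa: "\<not> l w a \<noteq> 0"
      have "dd a b c w = 1" by (rule rig) (use a b ab c w wa wb la lb in \<open>auto simp: obsL_def fullL_def\<close>)
      moreover have "dd a b d w = 1" by (rule rig) (use a b ab d w wa wb la lb in \<open>auto simp: obsL_def fullL_def\<close>)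
      ultimately have "dd a b c d = 1" using dd_one_comb_c a b c d w by blast
      with bad show False by simp
    qed
  qed
  have H2: "l c z \<noteq> 0 \<longleftrightarrow> l d z \<noteq> 0" if z: "z \<in> Is" "z \<noteq> a" "z \<noteq> b" for z
  proof
    assume zc: "l c z \<noteq> 0"
    show "l d z \<noteq> 0"
    proof (rule ccontr)
      assume zd: "\<not> l d z \<noteq> 0"
      have "dd a z c d = 1" by (rule rig) (use a z c d cd zc zd la lb in \<open>auto simp: obsL_def fullL_def\<close>)
      moreover have "dd b z c d = 1" by (rule rig) (use b z c d cd zc zd la lb in \<open>auto simp: obsL_def fullL_def\<close>)
      ultimately have "dd a b c d = 1" using dd_one_comb_r a b c d z by blast
      with bad show False by simp
    qed
  next
    assume zd: "l d z \<noteq> 0"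
    show "l c z \<noteq> 0"
    proof (rule ccontr)
      assume zc: "\<not> l c z \<noteq> 0"
      have "dd a z c d = 1" by (rule rig) (use a z c d cd zc zd la lb in \<open>auto simp: obsL_def fullL_def\<close>)
      moreover have "dd b z c d = 1" by (rule rig) (use b z c d cd zc zd la lb in \<open>auto simp: obsL_def fullL_def\<close>)
      ultimately have "dd a b c d = 1" using dd_one_comb_r a b c d z by blast
      with bad show False by simp
    qed
  qed
  have H3: "l c z \<noteq> 0" if z: "z \<in> Is" "z \<noteq> a" "z \<noteq> b" and w: "w \<in> Os" "w \<noteq> c" "w \<noteq> d"
    and wz: "l w z \<noteq> 0" for z w
  proof (rule ccontr)
    assume zc: "\<not> l c z \<noteq> 0"
    then have zd: "\<not> l d z \<noteq> 0" using H2 z by blast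
    have "dd z a w c = 1" by (rule rig) (use a z c w zc wz la in \<open>auto simp: obsL_def fullL_def\<close>)
    moreover have "dd z a w d = 1" by (rule rig) (use a z d w zd wz la in \<open>auto simp: obsL_def fullL_def\<close>)
    ultimately have 1: "dd z a c d = 1" using dd_one_comb_c[of z a c d w] dd_swc[of z a w c] dd_swc[of z a w d] a z c d w by auto
    have "dd z b w c = 1" by (rule rig) (use b z c w zc wz lb in \<open>auto simp: obsL_def fullL_def\<close>)
    moreover have "dd z b w d = 1" by (rule rig) (use b z d w zd wz lb in \<open>auto simp: obsL_def fullL_def\<close>)
    ultimately have 2: "dd z b c d = 1" using dd_one_comb_c[of z b c d w] dd_swc[of z b w c] dd_swc[of z b w d] b z c d w by auto
    have "dd a b c d = 1" using dd_one_comb_r[of a b z c d] dd_swr[of z a c d] dd_swr[of z b c d] 1 2 a b z c d by auto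
    with bad show False by simp
  qed
  have H3': "l w a \<noteq> 0" if z: "z \<in> Is" "z \<noteq> a" "z \<noteq> b" and w: "w \<in> Os" "w \<noteq> c" "w \<noteq> d"
    and wz: "l w z \<noteq> 0" for z w
  proof (rule ccontr)
    assume wa: "\<not> l w a \<noteq> 0"
    then have wb: "\<not> l w b \<noteq> 0" using H1 w by blast
    have "dd a z c w = 1" by (rule rig) (use a z c w wa wz la in \<open>auto simp: obsL_def fullL_def\<close>)
    moreover have "dd b z c w = 1" by (rule rig) (use b z c w wb wz lb in \<open>auto simp: obsL_def fullL_def\<close>)
    ultimately have 1: "dd a b c w = 1" using dd_one_comb_r[of a b z c w] a b z c w by auto
    have "dd a z d w = 1" by (rule rig) (use a z d w wa wz la in \<open>auto simp: obsL_def fullL_def\<close>)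
    moreover have "dd b z d w = 1" by (rule rig) (use b z d w wb wz lb in \<open>auto simp: obsL_def fullL_def\<close>)
    ultimately have 2: "dd a b d w = 1" using dd_one_comb_r[of a b z d w] a b z d w by auto
    have "dd a b c d = 1" using dd_one_comb_c[of a b c d w] 1 2 a b c d w by auto
    with bad show False by simp
  qed
  have H4: "l w z \<noteq> 0" if z: "z \<in> Is" "z \<noteq> a" "z \<noteq> b" and w: "w \<in> Os" "w \<noteq> c" "w \<noteq> d"
    and zc: "l c z \<noteq> 0" and zd: "l d z \<noteq> 0" and wa: "l w a \<noteq> 0" and wb: "l w b \<noteq> 0" for z w
  proof (rule ccontr)
    assume wz: "\<not> l w z \<noteq> 0"
    have "dd z a c w = 1" by (rule rig) (use a z c w zc wa wz in \<open>auto simp: obsL_def fullL_def\<close>)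
    moreover have "dd z a d w = 1" by (rule rig) (use a z d w zd wa wz in \<open>auto simp: obsL_def fullL_def\<close>)
    ultimately have 1: "dd z a c d = 1" using dd_one_comb_c[of z a c d w] a z c d w by auto
    have "dd z b c w = 1" by (rule rig) (use b z c w zc wb wz in \<open>auto simp: obsL_def fullL_def\<close>)
    moreover have "dd z b d w = 1" by (rule rig) (use b z d w zd wb wz in \<open>auto simp: obsL_def fullL_def\<close>)
    ultimately have 2: "dd z b c d = 1" using dd_one_comb_c[of z b c d w] b z c d w by auto
    have "dd a b c d = 1" using dd_one_comb_r[of a b z c d] dd_swr[of z a c d] dd_swr[of z b c d] 1 2 a b z c d by auto
    with bad show False by simp
  qed
  show "(l c z \<noteq> 0 \<and> l d z \<noteq> 0) \<and> (l w a \<noteq> 0 \<and> l w b \<noteq> 0)"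
    if z: "z \<in> Is" and w: "w \<in> Os" and wz: "l w z \<noteq> 0" for z w
  proof -
    have R: "l c z \<noteq> 0 \<and> l d z \<noteq> 0"
    proof (cases "z = a \<or> z = b")
      case True then show ?thesis using la lb by auto
    next
      case False
      show ?thesis
      proof (cases "w = c \<or> w = d")
        case True then show ?thesis using H2 False z wz by auto
      next
        case False2: False
        then show ?thesis using H3[of z w] H2[of z] False z w wz by auto
      qed
    qed
    have C: "l w a \<noteq> 0 \<and> l w b \<noteq> 0"
    proof (cases "w = c \<or> w = d")
      case True then show ?thesis using la lb by auto
    next
      case False
      show ?thesis
      proof (cases "z = a \<or> z = b")
        case True then show ?thesis using H1 False w wz by auto
      next
        case False2: False
        then show ?thesis using H3'[of z w] H1[of w] False z w wz by auto
      qed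
    qed
    show ?thesis using R C by blast
  qed
  show "l w z \<noteq> 0" if z: "z \<in> Is" and w: "w \<in> Os" and "l c z \<noteq> 0" "l d z \<noteq> 0" "l w a \<noteq> 0" "l w b \<noteq> 0" for z w
    using H4[of z w] that by (cases "z = a \<or> z = b"; cases "w = c \<or> w = d") auto
qed

lemma region:
  assumes RI: "Rg \<subseteq> Is" and CO: "Cg \<subseteq> Os" and NG: "\<And>z w. z \<in> Rg \<Longrightarrow> w \<in> Cg \<Longrightarrow> l w z \<noteq> 0"
    and i: "i \<in> Rg" and j: "j \<in> Rg" and ij: "i \<noteq> j" and al: "al \<in> Cg" and be: "be \<in> Cg" and ab: "al \<noteq> be"
    and d0: "dd i j al be = 1" and k0: "kk i j al be \<noteq> 1"
    and a: "a \<in> Rg" and b: "b \<in> Rg" and c: "c \<in> Cg" and d: "d \<in> Cg"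
  shows "dd a b c d = 1"
proof -
  have rz: "r w z \<noteq> 0" if "z \<in> Rg" "w \<in> Cg" for z w using rnz that RI CO by auto
  have kk_col: "kk x y u v * kk x y v w = kk x y u w" if "x \<in> Rg" "y \<in> Rg" "u \<in> Cg" "v \<in> Cg" "w \<in> Cg" for x y u v w
    using rz[of x u] rz[of x v] rz[of x w] rz[of y u] rz[of y v] rz[of y w]
      NG[of x u] NG[of x v] NG[of x w] NG[of y u] NG[of y v] NG[of y w] that
    by (simp add: kk_def crr_def field_simps)
  have kk_row: "kk x y u v * kk y z u v = kk x z u v" if "x \<in> Rg" "y \<in> Rg" "z \<in> Rg" "u \<in> Cg" "v \<in> Cg" for x y z u v
    using rz[of x u] rz[of x v] rz[of z u] rz[of y u] rz[of y v] rz[of z v]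
      NG[of x u] NG[of x v] NG[of z u] NG[of y u] NG[of y v] NG[of z v] that
    by (simp add: kk_def crr_def field_simps)
  have kk_rr: "kk x x u v = 1" if "x \<in> Rg" "u \<in> Cg" "v \<in> Cg" for x u v
    using rz[of x u] rz[of x v] NG[of x u] NG[of x v] that
    by (simp add: kk_def crr_def field_simps)
  have kknz: "kk x y u v \<noteq> 0" if "x \<in> Rg" "y \<in> Rg" "u \<in> Cg" "v \<in> Cg" for x y u v
    using rz[of x u] rz[of x v] rz[of y u] rz[of y v] NG[of x u] NG[of x v] NG[of y u] NG[of y v] that
    by (simp add: kk_def crr_def)
  have opt2: "dd x y u v = 1 \<or> dd x y u v = kk x y u v"
    if "x \<in> Rg" "y \<in> Rg" "u \<in> Cg" "v \<in> Cg" "x \<noteq> y" "u \<noteq> v" for x y u v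
  proof -
    have "obsL l x y u v" "fullL l x y u v" using NG that by (auto simp: obsL_def fullL_def)
    then have "crr r' x y u v = crr r x y u v \<or> crr r' x y u v = crr l x y u v"
      using opt[of x y u v] that RI CO by auto
    then show ?thesis using dd_one_iff[of x y u v] that RI CO by (auto simp: dd_def kk_def)
  qed
  have ddc: "dd x y u v * dd x y v w = dd x y u w" if "x \<in> Rg" "y \<in> Rg" "u \<in> Cg" "v \<in> Cg" "w \<in> Cg" for x y u v w
    using dd_col that RI CO by blast
  have ddr: "dd x y u v * dd y z u v = dd x z u v" if "x \<in> Rg" "y \<in> Rg" "z \<in> Rg" "u \<in> Cg" "v \<in> Cg" for x y z u v
    using dd_row that RI CO by blast
  have ddswc: "dd x y v u = 1" if "x \<in> Rg" "y \<in> Rg" "u \<in> Cg" "v \<in> Cg" "dd x y u v = 1" for x y u v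
    using dd_swc that RI CO by blast
  have ddswr: "dd y x u v = 1" if "x \<in> Rg" "y \<in> Rg" "u \<in> Cg" "v \<in> Cg" "dd x y u v = 1" for x y u v
    using dd_swr that RI CO by blast
  have ddrc: "dd x y u u = 1" if "x \<in> Rg" "y \<in> Rg" "u \<in> Cg" for x y u using dd_refl_col that RI CO by blast
  have ddrr: "dd x x u v = 1" if "x \<in> Rg" "u \<in> Cg" "v \<in> Cg" for x u v using dd_refl_row that RI CO by blast
  have sa: "dd x y u w = 1" if x: "x \<in> Rg" and y: "y \<in> Rg" and u: "u \<in> Cg" and v: "v \<in> Cg" and "x \<noteq> y" "u \<noteq> v"
    and dq: "dd x y u v = 1" and kq: "kk x y u v \<noteq> 1" and w: "w \<in> Cg" for x y u v w
  proof (cases "w = u \<or> w = v")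
    case True then show ?thesis using ddrc x y u dq by auto
  next
    case False
    have e: "dd x y u w = dd x y v w" using ddc[of x y u v w] dq x y u v w by simp
    show ?thesis
    proof (rule ccontr)
      assume ne: "dd x y u w \<noteq> 1"
      then have "dd x y u w = kk x y u w" using opt2[of x y u w] x y u w False \<open>x \<noteq> y\<close> by auto
      moreover have "dd x y v w = kk x y v w" using opt2[of x y v w] x y v w False \<open>x \<noteq> y\<close> ne e by auto
      ultimately have "kk x y u w = kk x y v w" using e by simp
      moreover have "kk x y u v * kk x y v w = kk x y u w" using kk_col x y u v w by blast
      moreover have "kk x y v w \<noteq> 0" using kknz x y v w by blast
      ultimately have "kk x y u v = 1" by (metis mult_cancel_right1)
      with kq show False by simp
    qed
  qed
  have sa': "dd x z u v = 1" if x: "x \<in> Rg" and y: "y \<in> Rg" and u: "u \<in> Cg" and v: "v \<in> Cg" and "x \<noteq> y" "u \<noteq> v"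
    and dq: "dd x y u v = 1" and kq: "kk x y u v \<noteq> 1" and z: "z \<in> Rg" for x y u v z
  proof (cases "z = x \<or> z = y")
    case True then show ?thesis using ddrr x u v dq by auto
  next
    case False
    have e: "dd x z u v = dd y z u v" using ddr[of x y z u v] dq x y u v z by simp
    show ?thesis
    proof (rule ccontr)
      assume ne: "dd x z u v \<noteq> 1"
      then have "dd x z u v = kk x z u v" using opt2[of x z u v] x z u v False \<open>u \<noteq> v\<close> by auto
      moreover have "dd y z u v = kk y z u v" using opt2[of y z u v] y z u v False \<open>u \<noteq> v\<close> ne e by auto
      ultimately have "kk x z u v = kk y z u v" using e by simp
      moreover have "kk x y u v * kk y z u v = kk x z u v" using kk_row x y u v z by blast
      moreover have "kk y z u v \<noteq> 0" using kknz y z u v by blast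
      ultimately have "kk x y u v = 1" by (metis mult_cancel_right1)
      with kq show False by simp
    qed
  qed
  have sb: "dd x y u' v' = 1" if x: "x \<in> Rg" and y: "y \<in> Rg" and u: "u \<in> Cg" and v: "v \<in> Cg" and "x \<noteq> y" "u \<noteq> v"
    and dq: "dd x y u v = 1" and kq: "kk x y u v \<noteq> 1" and u': "u' \<in> Cg" and v': "v' \<in> Cg" for x y u v u' v'
  proof -
    have "dd x y u u' = 1" "dd x y u v' = 1" using sa that by blast+
    then show ?thesis using ddc[of x y u' u v'] ddswc[of x y u u'] x y u u' v' by auto
  qed
  have sb': "dd x' y' u v = 1" if x: "x \<in> Rg" and y: "y \<in> Rg" and u: "u \<in> Cg" and v: "v \<in> Cg" and "x \<noteq> y" "u \<noteq> v"
    and dq: "dd x y u v = 1" and kq: "kk x y u v \<noteq> 1" and x': "x' \<in> Rg" and y': "y' \<in> Rg" for x y u v x' y'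
  proof -
    have "dd x x' u v = 1" "dd x y' u v = 1" using sa' that by blast+
    then show ?thesis using ddr[of x' x y' u v] ddswr[of x x' u v] x x' y' u v by auto
  qed
  have sc: "\<exists>y\<in>{i,j}. dd y z c d = 1" if z: "z \<in> Rg" for z
  proof -
    have "kk i z al be * kk z j al be = kk i j al be" using kk_row i j z al be by blast
    then have "kk i z al be \<noteq> 1 \<or> kk z j al be \<noteq> 1" using k0 by auto
    then show ?thesis
    proof
      assume kz: "kk i z al be \<noteq> 1"
      then have "i \<noteq> z" using kk_rr i al be by auto
      have "dd i z al be = 1" using sb' i j al be ij ab d0 k0 z by blast
      then have "dd i z c d = 1" using sb[of i z al be c d] i z al be \<open>i \<noteq> z\<close> ab kz c d by blast
      then show ?thesis by blast
    next
      assume kz: "kk z j al be \<noteq> 1"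
      then have "z \<noteq> j" using kk_rr j al be by auto
      have "dd z j al be = 1" using sb' i j al be ij ab d0 k0 z by blast
      then have "dd z j c d = 1" using sb[of z j al be c d] j z al be \<open>z \<noteq> j\<close> ab kz c d by blast
      then show ?thesis using ddswr[of z j c d] z j c d by blast
    qed
  qed
  have sij: "dd y1 y2 c d = 1" if "y1 \<in> {i,j}" "y2 \<in> {i,j}" for y1 y2
  proof -
    have "dd i j c d = 1" using sb i j al be ij ab d0 k0 c d by blast
    then show ?thesis using that ddrr[of i c d] ddrr[of j c d] ddswr[of i j c d] i j c d by auto
  qed
  obtain y1 where y1: "y1 \<in> {i,j}" "dd y1 a c d = 1" using sc a by blast
  obtain y2 where y2: "y2 \<in> {i,j}" "dd y2 b c d = 1" using sc b by blast
  have y1R: "y1 \<in> Rg" and y2R: "y2 \<in> Rg" using y1 y2 i j by auto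
  have "dd a y1 c d = 1" using ddswr y1 y1R a c d by blast
  moreover have "dd y1 b c d = 1" using ddr[of y1 y2 b c d] sij[of y1 y2] y1 y2 y1R y2R b c d by auto
  ultimately show ?thesis using ddr[of a y1 b c d] a b y1R c d by auto
qed

lemma core_main:
  assumes i: "i \<in> Is" and j: "j \<in> Is" and ij: "i \<noteq> j" and al: "al \<in> Os" and be: "be \<in> Os" and ab: "al \<noteq> be"
    and obs0: "obsL l i j al be" and eq0: "crr r' i j al be = crr r i j al be"
    and dist0: "fullL l i j al be \<Longrightarrow> crr l i j al be \<noteq> crr r i j al be"
    and x: "x \<in> Is" and y: "y \<in> Is" and xy: "x \<noteq> y" and u: "u \<in> Os" and v: "v \<in> Os" and uv: "u \<noteq> v"
    and obst: "obsL l x y u v"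
  shows "crr r' x y u v = crr r x y u v"
proof (cases "fullL l x y u v")
  case False
  then show ?thesis using rig[OF x y xy u v uv obst] dd_one_iff x y u v by blast
next
  case True
  show ?thesis
  proof (rule ccontr)
    assume ne: "crr r' x y u v \<noteq> crr r x y u v"
    then have bad: "dd x y u v \<noteq> 1" using dd_one_iff x y u v by blast
    note Z = bad_grid(1)[OF x y xy u v uv True bad]
    note F = bad_grid(2)[OF x y xy u v uv True bad]
    let ?Rf = "\<lambda>z. l u z \<noteq> 0 \<and> l v z \<noteq> 0"
    let ?Cf = "\<lambda>w. l w x \<noteq> 0 \<and> l w y \<noteq> 0"
    have "?Rf i \<and> ?Rf j \<and> ?Cf al \<and> ?Cf be"
      using obs0 Z[of i al] Z[of j be] Z[of i be] Z[of j al] i j al be unfolding obsL_def by blast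
    moreover have "?Rf x \<and> ?Rf y \<and> ?Cf u \<and> ?Cf v" using True by (auto simp: fullL_def)
    ultimately have NG: "l w z \<noteq> 0" if "z \<in> {i,j,x,y}" "w \<in> {al,be,u,v}" for z w
      using F[of z w] that i j x y al be u v by auto
    have "dd i j al be = 1" using dd_one_iff i j al be eq0 by blast
    moreover have "kk i j al be \<noteq> 1"
    proof
      assume "kk i j al be = 1"
      moreover have "crr r i j al be \<noteq> 0" using rnz i j al be by (simp add: crr_def)
      ultimately have "crr l i j al be = crr r i j al be" by (simp add: kk_def)
      moreover have "fullL l i j al be" using NG by (auto simp: fullL_def)
      ultimately show False using dist0 by blast
    qed
    ultimately have "dd x y u v = 1"
      using region[of "{i,j,x,y}" "{al,be,u,v}" i j al be x y u v] NG i j x y al be u v ij ab by auto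
    with bad show False by simp
  qed
qed

end


lemma perm_agree_all:
  fixes \<sigma> \<pi> :: "nat \<Rightarrow> nat" and k a0 :: nat
  assumes s: "\<sigma> permutes {0..<k}" and p: "\<pi> permutes {0..<k}"
    and ag: "\<And>a. a < k \<Longrightarrow> a \<noteq> a0 \<Longrightarrow> \<sigma> a = \<pi> a"
  shows "\<sigma> = \<pi>"
proof
  fix a
  show "\<sigma> a = \<pi> a"
  proof (cases "a < k")
    case False
    then show ?thesis using permutes_not_in[OF s] permutes_not_in[OF p] by auto
  next
    case True
    show ?thesis
    proof (cases "a = a0")
      case False then show ?thesis using ag True by auto
    next
      case a0: True
      have "\<sigma> a \<in> {0..<k}" using permutes_in_image[OF s] True by auto
      then have "\<sigma> a \<in> \<pi> ` {0..<k}" using permutes_image[OF p] by simp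
      then obtain b where b: "b < k" "\<pi> b = \<sigma> a" by auto
      show ?thesis
      proof (cases "b = a0")
        case True then show ?thesis using b a0 by simp
      next
        case False
        then have "\<sigma> b = \<sigma> a" using ag b by auto
        then have "b = a" using permutes_inj[OF s] by (simp add: inj_eq)
        then show ?thesis using False a0 by simp
      qed
    qed
  qed
qed

lemma leib1:
  fixes M :: "'a::comm_ring_1 mat" and \<pi> :: "nat \<Rightarrow> nat" and k a0 :: nat
  assumes M: "M \<in> carrier_mat k k" and p: "\<pi> permutes {0..<k}" and a0: "a0 < k"
    and rows: "\<And>a b. a < k \<Longrightarrow> b < k \<Longrightarrow> a \<noteq> a0 \<Longrightarrow> M $$ (a,b) = (if b = \<pi> a then 1 else 0)"
  shows "det M = signof \<pi> * M $$ (a0, \<pi> a0)"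
proof -
  have "det M = (\<Sum>\<sigma>\<in>{\<sigma>. \<sigma> permutes {0..<k}}. signof \<sigma> * (\<Prod>i = 0..<k. M $$ (i, \<sigma> i)))"
    using det_def'[OF M] .
  also have "\<dots> = (\<Sum>\<sigma>\<in>{\<pi>}. signof \<sigma> * (\<Prod>i = 0..<k. M $$ (i, \<sigma> i)))"
  proof (rule sum.mono_neutral_right)
    show "finite {\<sigma>. \<sigma> permutes {0..<k}}" using finite_permutations by blast
    show "{\<pi>} \<subseteq> {\<sigma>. \<sigma> permutes {0..<k}}" using p by auto
    show "\<forall>\<sigma>\<in>{\<sigma>. \<sigma> permutes {0..<k}} - {\<pi>}. signof \<sigma> * (\<Prod>i = 0..<k. M $$ (i, \<sigma> i)) = 0"
    proof
      fix \<sigma> assume "\<sigma> \<in> {\<sigma>. \<sigma> permutes {0..<k}} - {\<pi>}"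
      then have s: "\<sigma> permutes {0..<k}" and ne: "\<sigma> \<noteq> \<pi>" by auto
      then obtain a where a: "a < k" "a \<noteq> a0" "\<sigma> a \<noteq> \<pi> a" using perm_agree_all[OF s p, of a0] by blast
      have "\<sigma> a < k" using permutes_in_image[OF s] a by auto
      then have "M $$ (a, \<sigma> a) = 0" using rows[of a "\<sigma> a"] a by auto
      then have "(\<Prod>i = 0..<k. M $$ (i, \<sigma> i)) = 0" using a by (intro prod_zero) force+
      then show "signof \<sigma> * (\<Prod>i = 0..<k. M $$ (i, \<sigma> i)) = 0" by simp
    qed
  qed
  also have "\<dots> = signof \<pi> * (\<Prod>i = 0..<k. M $$ (i, \<pi> i))" by simp
  also have "\<dots> = signof \<pi> * M $$ (a0, \<pi> a0)"
  proof -
    have "(\<Prod>i = 0..<k. M $$ (i, \<pi> i)) = M $$ (a0, \<pi> a0) * (\<Prod>i \<in> {0..<k} - {a0}. M $$ (i, \<pi> i))"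
      using a0 by (subst prod.remove[of _ a0]) auto
    moreover have "(\<Prod>i \<in> {0..<k} - {a0}. M $$ (i, \<pi> i)) = 1"
    proof (rule prod.neutral, intro ballI)
      fix i assume i: "i \<in> {0..<k} - {a0}"
      have "\<pi> i < k" using permutes_in_image[OF p] i by auto
      then show "M $$ (i, \<pi> i) = 1" using rows[of i "\<pi> i"] i by auto
    qed
    ultimately show ?thesis by simp
  qed
  finally show ?thesis .
qed

lemma perm_agree_two:
  fixes \<sigma> \<pi> :: "nat \<Rightarrow> nat" and k a0 a1 :: nat
  assumes s: "\<sigma> permutes {0..<k}" and p: "\<pi> permutes {0..<k}" and a01: "a0 < k" "a1 < k"
    and ag: "\<And>a. a < k \<Longrightarrow> a \<noteq> a0 \<Longrightarrow> a \<noteq> a1 \<Longrightarrow> \<sigma> a = \<pi> a"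
  shows "\<sigma> = \<pi> \<or> \<sigma> = \<pi> \<circ> Transposition.transpose a0 a1"
proof -
  define rr where "rr = inv_into UNIV \<pi> \<circ> \<sigma>"
  have rp: "rr permutes {0..<k}" unfolding rr_def using permutes_compose[OF s permutes_inv[OF p]] .
  have fx: "rr a = a" if a: "a \<in> {0..<k} - {a0, a1}" for a
  proof -
    have "\<sigma> a = \<pi> a" using ag a by auto
    then have "rr a = inv_into UNIV \<pi> (\<pi> a)" by (simp add: rr_def)
    also have "\<dots> = a" using permutes_inverses(2)[OF p] by simp
    finally show ?thesis .
  qed
  have "rr permutes {a0, a1}" by (rule permutes_superset[OF rp]) (use fx in blast)
  then have "rr = id \<or> rr = Transposition.transpose a0 a1" by (simp only: permutes_doubleton_iff)
  moreover have "\<sigma> = \<pi> \<circ> rr"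
  proof
    fix a show "\<sigma> a = (\<pi> \<circ> rr) a" unfolding rr_def comp_apply by (rule permutes_inverses(1)[OF p, symmetric])
  qed
  ultimately show ?thesis
  proof (elim disjE)
    assume "rr = id" "\<sigma> = \<pi> \<circ> rr"
    then show ?thesis by simp
  next
    assume "rr = Transposition.transpose a0 a1" "\<sigma> = \<pi> \<circ> rr"
    then show ?thesis by simp
  qed
qed

lemma leib2:
  fixes M :: "'a::comm_ring_1 mat" and \<pi> :: "nat \<Rightarrow> nat" and k a0 a1 :: nat
  assumes M: "M \<in> carrier_mat k k" and p: "\<pi> permutes {0..<k}" and a0: "a0 < k" and a1: "a1 < k" and a01: "a0 \<noteq> a1"
    and rows: "\<And>a b. a < k \<Longrightarrow> b < k \<Longrightarrow> a \<noteq> a0 \<Longrightarrow> a \<noteq> a1 \<Longrightarrow> M $$ (a,b) = (if b = \<pi> a then 1 else 0)"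
  shows "det M = signof \<pi> * (M $$ (a0, \<pi> a0) * M $$ (a1, \<pi> a1) - M $$ (a0, \<pi> a1) * M $$ (a1, \<pi> a0))"
proof -
  define t where "t = Transposition.transpose a0 a1"
  have tp: "t permutes {0..<k}" unfolding t_def by (rule permutes_swap_id) (use a0 a1 in auto)
  have pt: "\<pi> \<circ> t permutes {0..<k}" using permutes_compose[OF tp p] .
  have ne: "\<pi> \<circ> t \<noteq> \<pi>"
  proof
    assume "\<pi> \<circ> t = \<pi>"
    then have "\<pi> (t a0) = \<pi> a0" by (metis comp_apply)
    then have "t a0 = a0" using permutes_inj[OF p] by (simp add: inj_eq)
    then show False using a01 by (simp add: t_def)
  qed
  have sgn: "signof (\<pi> \<circ> t) = - (signof \<pi> :: 'a)"
  proof -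
    have "sign (\<pi> \<circ> t) = sign \<pi> * sign t"
      by (rule sign_compose) (use permutes_imp_permutation p tp in auto)
    moreover have "sign t = (-1::int)" using a01 by (simp add: t_def sign_swap_id)
    ultimately show ?thesis by simp
  qed
  let ?f = "\<lambda>\<sigma>. signof \<sigma> * (\<Prod>i = 0..<k. M $$ (i, \<sigma> i))"
  have "det M = (\<Sum>\<sigma>\<in>{\<sigma>. \<sigma> permutes {0..<k}}. ?f \<sigma>)"
    using det_def'[OF M] .
  also have "\<dots> = (\<Sum>\<sigma>\<in>{\<pi>, \<pi> \<circ> t}. ?f \<sigma>)"
  proof (rule sum.mono_neutral_right)
    show "finite {\<sigma>. \<sigma> permutes {0..<k}}" using finite_permutations by blast
    show "{\<pi>, \<pi> \<circ> t} \<subseteq> {\<sigma>. \<sigma> permutes {0..<k}}" using p pt by auto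
    show "\<forall>\<sigma>\<in>{\<sigma>. \<sigma> permutes {0..<k}} - {\<pi>, \<pi> \<circ> t}. ?f \<sigma> = 0"
    proof
      fix \<sigma> assume "\<sigma> \<in> {\<sigma>. \<sigma> permutes {0..<k}} - {\<pi>, \<pi> \<circ> t}"
      then have s: "\<sigma> permutes {0..<k}" and ne: "\<sigma> \<noteq> \<pi>" "\<sigma> \<noteq> \<pi> \<circ> t" by auto
      then obtain a where a: "a < k" "a \<noteq> a0" "a \<noteq> a1" "\<sigma> a \<noteq> \<pi> a"
        using perm_agree_two[OF s p a0 a1] unfolding t_def by blast
      have "\<sigma> a < k" using permutes_in_image[OF s] a by auto
      then have "M $$ (a, \<sigma> a) = 0" using rows[of a "\<sigma> a"] a by auto
      then have "(\<Prod>i = 0..<k. M $$ (i, \<sigma> i)) = 0" using a by (intro prod_zero) force+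
      then show "?f \<sigma> = 0" by simp
    qed
  qed
  also have "\<dots> = ?f \<pi> + ?f (\<pi> \<circ> t)" using ne by (simp add: sum.insert_if)
  also have "\<dots> = signof \<pi> * (M $$ (a0, \<pi> a0) * M $$ (a1, \<pi> a1) - M $$ (a0, \<pi> a1) * M $$ (a1, \<pi> a0))"
  proof -
    have rest: "(\<Prod>i \<in> {0..<k} - {a0, a1}. M $$ (i, \<pi> i)) = 1"
    proof (rule prod.neutral, intro ballI)
      fix i assume i: "i \<in> {0..<k} - {a0, a1}"
      have "\<pi> i < k" using permutes_in_image[OF p] i by auto
      then show "M $$ (i, \<pi> i) = 1" using rows[of i "\<pi> i"] i by auto
    qed
    have rest2: "(\<Prod>i \<in> {0..<k} - {a0, a1}. M $$ (i, (\<pi> \<circ> t) i)) = 1"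
    proof (rule prod.neutral, intro ballI)
      fix i assume i: "i \<in> {0..<k} - {a0, a1}"
      have ti: "t i = i" using i by (simp add: t_def)
      have "\<pi> i < k" using permutes_in_image[OF p] i by auto
      then show "M $$ (i, (\<pi> \<circ> t) i) = 1" using rows[of i "\<pi> i"] i ti by auto
    qed
    have split: "(\<Prod>i = 0..<k. g i) = g a0 * g a1 * (\<Prod>i \<in> {0..<k} - {a0, a1}. g i)" for g :: "nat \<Rightarrow> 'a"
    proof -
      have "{0..<k} = insert a0 (insert a1 ({0..<k} - {a0, a1}))" using a0 a1 by auto
      then have "(\<Prod>i = 0..<k. g i) = (\<Prod>i \<in> insert a0 (insert a1 ({0..<k} - {a0, a1})). g i)" by simp
      also have "\<dots> = g a0 * (g a1 * (\<Prod>i \<in> {0..<k} - {a0, a1}. g i))"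
        using a01 by (subst prod.insert) (auto simp: prod.insert)
      finally show ?thesis by (simp add: mult.assoc)
    qed
    have p1: "(\<Prod>i = 0..<k. M $$ (i, \<pi> i)) = M $$ (a0, \<pi> a0) * M $$ (a1, \<pi> a1)"
      using split[of "\<lambda>i. M $$ (i, \<pi> i)"] rest by simp
    have t0: "t a0 = a1" and t1: "t a1 = a0" by (auto simp: t_def)
    have p2: "(\<Prod>i = 0..<k. M $$ (i, (\<pi> \<circ> t) i)) = M $$ (a0, \<pi> a1) * M $$ (a1, \<pi> a0)"
      using split[of "\<lambda>i. M $$ (i, (\<pi> \<circ> t) i)"] rest2 t0 t1 by simp
    show ?thesis using p1 p2 sgn by (simp add: algebra_simps)
  qed
  finally show ?thesis .
qed



lemma card_UNIV_lt[simp]: "card {j. j < (p::nat) \<and> j \<in> UNIV} = p"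
  by simp

lemma card_J_lt: "J \<subseteq> {0..<n} \<Longrightarrow> card {i. i < n \<and> i \<in> J} = card J"
  by (rule arg_cong[of _ _ card]) auto

lemma submatrix_mult_rows:
  assumes A: "A \<in> carrier_mat n m" and B: "B \<in> carrier_mat m p" and J: "J \<subseteq> {0..<n}"
  shows "submatrix (A * B) J UNIV = submatrix A J UNIV * B"
proof (rule eq_matI)
  show dr: "dim_row (submatrix (A * B) J UNIV) = dim_row (submatrix A J UNIV * B)"
    using A B by (simp add: dim_submatrix)
  show dc: "dim_col (submatrix (A * B) J UNIV) = dim_col (submatrix A J UNIV * B)"
    using A B by (simp add: dim_submatrix)
  fix i j assume i: "i < dim_row (submatrix A J UNIV * B)" and j: "j < dim_col (submatrix A J UNIV * B)"
  have i': "i < card {i. i < n \<and> i \<in> J}" using i A by (simp add: dim_submatrix)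
  have j': "j < p" using j B by simp
  have pn: "pick J i < n"
  proof -
    have e: "{i. i < n \<and> i \<in> J} = J" using J by auto
    have "pick J i \<in> J" using pick_in_set[of i J] i' e by auto
    then show ?thesis using J by auto
  qed
  have "submatrix (A * B) J UNIV $$ (i, j) = (A * B) $$ (pick J i, pick UNIV j)"
    by (rule submatrix_index) (use i' j' A B in auto)
  also have "\<dots> = row A (pick J i) \<bullet> col B j"
  proof -
    show ?thesis using pn using A B j' by (simp add: pick_UNIV)
  qed
  also have "\<dots> = (submatrix A J UNIV * B) $$ (i, j)"
  proof -
    have "row (submatrix A J UNIV) i = row A (pick J i)"
    proof (rule eq_vecI)
      show "dim_vec (row (submatrix A J UNIV) i) = dim_vec (row A (pick J i))"
        using A by (simp add: dim_submatrix)
      fix b assume "b < dim_vec (row A (pick J i))"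
      then have b: "b < m" using A by simp
      show "row (submatrix A J UNIV) i $ b = row A (pick J i) $ b"
        using submatrix_index[of i A J b UNIV] i' b A pn by (simp add: pick_UNIV dim_submatrix index_row)
    qed
    then show ?thesis using i j A B by (simp add: dim_submatrix)
  qed
  finally show "submatrix (A * B) J UNIV $$ (i, j) = (submatrix A J UNIV * B) $$ (i, j)" .
qed

lemma reduce:
  fixes R :: "'a::field mat"
  assumes R: "R \<in> carrier_mat n k" and I: "I \<subseteq> {0..<n}" "card I = k"
    and dB: "det (submatrix R I UNIV) \<noteq> 0"
  defines "B \<equiv> submatrix R I UNIV"
  defines "C \<equiv> (1 / det B) \<cdot>\<^sub>m (R * adj_mat B)"
  shows "C \<in> carrier_mat n k"
    and "\<And>J. J \<subseteq> {0..<n} \<Longrightarrow> card J = k \<Longrightarrow> rowMinor R J = det (submatrix C J UNIV) * det B"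
    and "\<And>a b. a < k \<Longrightarrow> b < k \<Longrightarrow> C $$ (pick I a, b) = (if a = b then 1 else 0)"
proof -
  have dr: "dim_row B = k" unfolding B_def dim_submatrix(1) using R card_J_lt[OF I(1)] I(2) by auto
  have dc: "dim_col B = k" unfolding B_def dim_submatrix(2) using R by auto
  have B: "B \<in> carrier_mat k k" using dr dc by auto
  have d: "det B \<noteq> 0" using dB by (simp add: B_def)
  note adj = adj_mat[OF B]
  show C: "C \<in> carrier_mat n k" using R adj(1) by (simp add: C_def)
  have CB: "C * B = R"
  proof -
    have 1: "C * B = (1 / det B) \<cdot>\<^sub>m ((R * adj_mat B) * B)"
      unfolding C_def by (rule mult_smult_assoc_mat) (use R adj(1) B in auto)
    have 2: "(R * adj_mat B) * B = R * (adj_mat B * B)" using R adj(1) B by (rule assoc_mult_mat)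
    have 4: "R * (det B \<cdot>\<^sub>m 1\<^sub>m k) = det B \<cdot>\<^sub>m (R * 1\<^sub>m k)" by (rule mult_smult_distrib) (use R in auto)
    have 5: "R * 1\<^sub>m k = R" using R by (rule right_mult_one_mat)
    have "C * B = (1 / det B) \<cdot>\<^sub>m (det B \<cdot>\<^sub>m R)" unfolding 1 2 adj(3) 4 5 ..
    then show ?thesis using d R by (intro eq_matI) auto
  qed
  have subJ: "submatrix C J UNIV \<in> carrier_mat k k" if "J \<subseteq> {0..<n}" "card J = k" for J
  proof -
    have "dim_row (submatrix C J UNIV) = k" unfolding dim_submatrix(1) using C card_J_lt[OF that(1)] that(2) by auto
    moreover have "dim_col (submatrix C J UNIV) = k" unfolding dim_submatrix(2) using C by auto
    ultimately show ?thesis by auto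
  qed
  have red: "submatrix R J UNIV = submatrix C J UNIV * B" if "J \<subseteq> {0..<n}" for J
    using submatrix_mult_rows[OF C B that] CB by simp
  show "rowMinor R J = det (submatrix C J UNIV) * det B" if "J \<subseteq> {0..<n}" "card J = k" for J
    unfolding rowMinor_def red[OF that(1)] by (rule det_mult[OF subJ[OF that] B])
  have SI: "submatrix C I UNIV = 1\<^sub>m k"
  proof -
    let ?S = "submatrix C I UNIV"
    have S: "?S \<in> carrier_mat k k" using subJ I by blast
    have SB: "?S * B = B" using red[OF I(1)] by (simp add: B_def)
    have a1: "(?S * B) * adj_mat B = ?S * (B * adj_mat B)" by (rule assoc_mult_mat[OF S B adj(1)])
    have a2: "?S * (det B \<cdot>\<^sub>m 1\<^sub>m k) = det B \<cdot>\<^sub>m (?S * 1\<^sub>m k)" by (rule mult_smult_distrib[OF S]) auto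
    have a3: "?S * 1\<^sub>m k = ?S" by (rule right_mult_one_mat[OF S])
    have "?S * (B * adj_mat B) = B * adj_mat B" using a1 unfolding SB by simp
    then have e: "det B \<cdot>\<^sub>m ?S = det B \<cdot>\<^sub>m 1\<^sub>m k" unfolding adj(2) a2 a3 .
    show ?thesis
    proof (rule eq_matI)
      fix a b assume "a < dim_row (1\<^sub>m k)" "b < dim_col (1\<^sub>m k)"
      then have ab: "a < k" "b < k" by auto
      have "(det B \<cdot>\<^sub>m ?S) $$ (a,b) = (det B \<cdot>\<^sub>m 1\<^sub>m k) $$ (a,b)" using e by simp
      then show "?S $$ (a,b) = 1\<^sub>m k $$ (a,b)" using ab S d by auto
    qed (use S in auto)
  qed
  show "C $$ (pick I a, b) = (if a = b then 1 else 0)" if "a < k" "b < k" for a b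
  proof -
    have "submatrix C I UNIV $$ (a, b) = C $$ (pick I a, pick UNIV b)"
      by (rule submatrix_index) (use that C I card_J_lt[OF I(1)] in auto)
    then show ?thesis using SI that by (simp add: pick_UNIV)
  qed
qed



definition posI :: "nat set \<Rightarrow> nat \<Rightarrow> nat" where "posI I w = card {z\<in>I. z < w}"

lemma pick_pos: "w \<in> I \<Longrightarrow> pick I (posI I w) = w"
  unfolding posI_def by (rule pick_card_in_set)

lemma pos_lt: "finite I \<Longrightarrow> w \<in> I \<Longrightarrow> posI I w < card I"
  unfolding posI_def by (rule psubset_card_mono) auto

lemma pos_inj: "w \<in> I \<Longrightarrow> w' \<in> I \<Longrightarrow> posI I w = posI I w' \<Longrightarrow> w = w'"
  using pick_pos by metis

lemma pos_pick: "a < card I \<Longrightarrow> posI I (pick I a) = a"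
  unfolding posI_def using card_pick by blast

lemma pick_in: "a < card I \<Longrightarrow> pick I a \<in> I"
  using pick_in_set by blast

lemma perm_phi:
  fixes \<phi> :: "nat \<Rightarrow> nat"
  assumes J: "finite J" "card J = k" and inj: "inj_on \<phi> J" and img: "\<phi> ` J \<subseteq> {0..<k}"
  shows "(\<lambda>a. if a < k then \<phi> (pick J a) else a) permutes {0..<k}"
proof -
  let ?p = "\<lambda>a. if a < k then \<phi> (pick J a) else a"
  have inj2: "inj_on ?p {0..<k}"
  proof (rule inj_onI)
    fix a b assume a: "a \<in> {0..<k}" and b: "b \<in> {0..<k}" and e: "?p a = ?p b"
    have pa: "pick J a \<in> J" and pb: "pick J b \<in> J" using pick_in a b J by auto
    have "\<phi> (pick J a) = \<phi> (pick J b)" using e a b by auto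
    then have "pick J a = pick J b" using inj pa pb by (auto dest: inj_onD)
    then have "posI J (pick J a) = posI J (pick J b)" by simp
    then show "a = b" using pos_pick a b J by auto
  qed
  have im: "?p ` {0..<k} \<subseteq> {0..<k}"
  proof
    fix y assume "y \<in> ?p ` {0..<k}"
    then obtain a where a: "a < k" "y = ?p a" by auto
    have "pick J a \<in> J" using pick_in a J by auto
    then show "y \<in> {0..<k}" using img a by auto
  qed
  have "?p ` {0..<k} = {0..<k}" using endo_inj_surj[OF _ im inj2] by auto
  then have "bij_betw ?p {0..<k} {0..<k}" using inj2 by (simp add: bij_betw_def)
  moreover have "{x. ?p x \<noteq> x} \<subseteq> {0..<k}" by auto
  ultimately show ?thesis by (simp add: permutes_altdef)
qed

definition sp1 :: "nat set \<Rightarrow> nat \<Rightarrow> nat \<Rightarrow> nat \<Rightarrow> nat" where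
  "sp1 I x u = (\<lambda>a. if a < card I then (if pick (swap1 I x u) a = u then posI I x else posI I (pick (swap1 I x u) a)) else a)"

definition sp2 :: "nat set \<Rightarrow> nat \<Rightarrow> nat \<Rightarrow> nat \<Rightarrow> nat \<Rightarrow> nat \<Rightarrow> nat" where
  "sp2 I x y u v = (\<lambda>a. if a < card I then (if pick (swap2 I x y u v) a = u then posI I x
      else if pick (swap2 I x y u v) a = v then posI I y else posI I (pick (swap2 I x y u v) a)) else a)"

lemma sub_carrier:
  assumes C: "C \<in> carrier_mat n k" and J: "J \<subseteq> {0..<n}" "card J = k"
  shows "submatrix C J UNIV \<in> carrier_mat k k"
proof -
  have "dim_row (submatrix C J UNIV) = k" unfolding dim_submatrix(1) using C card_J_lt[OF J(1)] J(2) by auto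
  moreover have "dim_col (submatrix C J UNIV) = k" unfolding dim_submatrix(2) using C by auto
  ultimately show ?thesis by auto
qed

lemma sub_index:
  assumes C: "C \<in> carrier_mat n k" and J: "J \<subseteq> {0..<n}" "card J = k" and a: "a < k" and b: "b < k"
  shows "submatrix C J UNIV $$ (a, b) = C $$ (pick J a, b)"
proof -
  have "submatrix C J UNIV $$ (a, b) = C $$ (pick J a, pick UNIV b)"
    by (rule submatrix_index) (use C J a b card_J_lt[OF J(1)] in auto)
  then show ?thesis by (simp add: pick_UNIV)
qed

lemma minor1:
  fixes C :: "'a::comm_ring_1 mat"
  assumes C: "C \<in> carrier_mat n k" and I: "I \<subseteq> {0..<n}" "card I = k" and x: "x \<in> I"
    and u: "u \<in> {0..<n} - I"
    and Cid: "\<And>a b. a < k \<Longrightarrow> b < k \<Longrightarrow> C $$ (pick I a, b) = (if a = b then 1 else 0)"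
  shows "det (submatrix C (swap1 I x u) UNIV) = signof (sp1 I x u) * C $$ (u, posI I x)"
proof -
  let ?J = "swap1 I x u"
  have fI: "finite I" using I finite_subset by blast
  have Jeq: "?J = insert u (I - {x})" by (simp add: swap1_def)
  have fJ: "finite ?J" using fI Jeq by simp
  have k0: "k > 0" using x fI I(2) card_gt_0_iff by blast
  have cJ: "card ?J = k" using Jeq u x fI I(2) k0 by (simp add: card_Diff_singleton)
  have JS: "?J \<subseteq> {0..<n}" using Jeq I u by auto
  define \<phi> where "\<phi> w = (if w = u then posI I x else posI I w)" for w
  have sp: "sp1 I x u = (\<lambda>a. if a < k then \<phi> (pick ?J a) else a)"
    unfolding sp1_def \<phi>_def I(2) by (rule ext) simp
  have inj: "inj_on \<phi> ?J"
  proof (rule inj_onI)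
    fix w w' assume w: "w \<in> ?J" and w': "w' \<in> ?J" and e: "\<phi> w = \<phi> w'"
    show "w = w'"
    proof (cases "w = u"; cases "w' = u")
      assume "w = u" "w' \<noteq> u"
      then have "posI I x = posI I w'" "w' \<in> I" "w' \<noteq> x" using e w' Jeq by (auto simp: \<phi>_def)
      then show ?thesis using pos_inj x by blast
    next
      assume "w \<noteq> u" "w' = u"
      then have "posI I w = posI I x" "w \<in> I" "w \<noteq> x" using e w Jeq by (auto simp: \<phi>_def)
      then show ?thesis using pos_inj x by blast
    next
      assume "w \<noteq> u" "w' \<noteq> u"
      then show ?thesis using e w w' Jeq pos_inj by (auto simp: \<phi>_def)
    qed simp
  qed
  have img: "\<phi> ` ?J \<subseteq> {0..<k}"
    using pos_lt[OF fI] x Jeq I(2) by (auto simp: \<phi>_def)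
  have p: "sp1 I x u permutes {0..<k}" unfolding sp by (rule perm_phi[OF fJ cJ inj img])
  define a0 where "a0 = posI ?J u"
  have uJ: "u \<in> ?J" using Jeq by auto
  have a0k: "a0 < k" using pos_lt[OF fJ uJ] cJ by (simp add: a0_def)
  have pa0: "pick ?J a0 = u" using pick_pos[OF uJ] by (simp add: a0_def)
  have M: "submatrix C ?J UNIV \<in> carrier_mat k k" by (rule sub_carrier[OF C JS cJ])
  have "det (submatrix C ?J UNIV) = signof (sp1 I x u) * submatrix C ?J UNIV $$ (a0, sp1 I x u a0)"
  proof (rule leib1[OF M p a0k])
    fix a b assume a: "a < k" and b: "b < k" and ne: "a \<noteq> a0"
    have wJ: "pick ?J a \<in> ?J" using pick_in[of a ?J] a cJ by auto
    have wu: "pick ?J a \<noteq> u"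
    proof
      assume "pick ?J a = u"
      then have "posI ?J (pick ?J a) = a0" by (simp add: a0_def)
      then show False using pos_pick[of a ?J] a cJ ne by auto
    qed
    then have wI: "pick ?J a \<in> I" using wJ Jeq by auto
    have pk: "posI I (pick ?J a) < k" using pos_lt[OF fI wI] I(2) by simp
    have "submatrix C ?J UNIV $$ (a, b) = C $$ (pick ?J a, b)" by (rule sub_index[OF C JS cJ a b])
    also have "\<dots> = C $$ (pick I (posI I (pick ?J a)), b)" using pick_pos[OF wI] by simp
    also have "\<dots> = (if posI I (pick ?J a) = b then 1 else 0)" using Cid[OF pk b] .
    also have "posI I (pick ?J a) = sp1 I x u a" unfolding sp using a wu by (simp add: \<phi>_def)
    finally show "submatrix C ?J UNIV $$ (a, b) = (if b = sp1 I x u a then 1 else 0)" by auto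
  qed
  also have "sp1 I x u a0 = posI I x" unfolding sp using a0k pa0 by (simp add: \<phi>_def)
  also have "submatrix C ?J UNIV $$ (a0, posI I x) = C $$ (u, posI I x)"
    using sub_index[OF C JS cJ a0k, of "posI I x"] pa0 pos_lt[OF fI x] I(2) by simp
  finally show ?thesis .
qed

lemma minor2:
  fixes C :: "'a::comm_ring_1 mat"
  assumes C: "C \<in> carrier_mat n k" and I: "I \<subseteq> {0..<n}" "card I = k" and x: "x \<in> I" and y: "y \<in> I" and xy: "x \<noteq> y"
    and u: "u \<in> {0..<n} - I" and v: "v \<in> {0..<n} - I" and uv: "u \<noteq> v"
    and Cid: "\<And>a b. a < k \<Longrightarrow> b < k \<Longrightarrow> C $$ (pick I a, b) = (if a = b then 1 else 0)"
  shows "det (submatrix C (swap2 I x y u v) UNIV) = signof (sp2 I x y u v) *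
     (C $$ (u, posI I x) * C $$ (v, posI I y) - C $$ (u, posI I y) * C $$ (v, posI I x))"
proof -
  let ?J = "swap2 I x y u v"
  have fI: "finite I" using I finite_subset by blast
  have Jeq: "?J = insert u (insert v (I - {x, y}))" by (auto simp: swap2_def)
  have fJ: "finite ?J" using fI Jeq by simp
  have k2: "card (I - {x,y}) = k - 2" using x y xy fI I(2) by (simp add: card_Diff_subset)
  have kk: "k \<ge> 2"
  proof -
    have "{x,y} \<subseteq> I" using x y by auto
    then have "card {x,y} \<le> card I" using fI card_mono by blast
    then show ?thesis using xy I(2) by simp
  qed
  have cJ: "card ?J = k" using Jeq u v uv fI k2 kk by simp
  have JS: "?J \<subseteq> {0..<n}" using Jeq I u v by auto
  define \<phi> where "\<phi> w = (if w = u then posI I x else if w = v then posI I y else posI I w)" for w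
  have sp: "sp2 I x y u v = (\<lambda>a. if a < k then \<phi> (pick ?J a) else a)"
    unfolding sp2_def \<phi>_def I(2) by (rule ext) simp
  have inj: "inj_on \<phi> ?J"
  proof (rule inj_onI)
    fix w w' assume w: "w \<in> ?J" and w': "w' \<in> ?J" and e: "\<phi> w = \<phi> w'"
    have c: "\<phi> z \<in> {posI I x} \<and> z = u \<or> \<phi> z = posI I y \<and> z = v \<or> (\<phi> z = posI I z \<and> z \<in> I - {x,y})" if "z \<in> ?J" for z
      using that Jeq by (auto simp: \<phi>_def)
    have px: "posI I x \<noteq> posI I y" using pos_inj x y xy by blast
    have pz: "posI I z \<noteq> posI I x" "posI I z \<noteq> posI I y" if "z \<in> I - {x,y}" for z
      using pos_inj x y that by blast+
    show "w = w'" using c[OF w] c[OF w'] e px pz pos_inj by (metis DiffD1 singletonD)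
  qed
  have img: "\<phi> ` ?J \<subseteq> {0..<k}"
    using pos_lt[OF fI] x y Jeq I(2) by (auto simp: \<phi>_def)
  have p: "sp2 I x y u v permutes {0..<k}" unfolding sp by (rule perm_phi[OF fJ cJ inj img])
  define a0 where "a0 = posI ?J u"
  define a1 where "a1 = posI ?J v"
  have uJ: "u \<in> ?J" and vJ: "v \<in> ?J" using Jeq by auto
  have a0k: "a0 < k" using pos_lt[OF fJ uJ] cJ by (simp add: a0_def)
  have a1k: "a1 < k" using pos_lt[OF fJ vJ] cJ by (simp add: a1_def)
  have pa0: "pick ?J a0 = u" using pick_pos[OF uJ] by (simp add: a0_def)
  have pa1: "pick ?J a1 = v" using pick_pos[OF vJ] by (simp add: a1_def)
  have a01: "a0 \<noteq> a1" using pa0 pa1 uv by metis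
  have M: "submatrix C ?J UNIV \<in> carrier_mat k k" by (rule sub_carrier[OF C JS cJ])
  let ?M = "submatrix C ?J UNIV" and ?p = "sp2 I x y u v"
  have "det ?M = signof ?p * (?M $$ (a0, ?p a0) * ?M $$ (a1, ?p a1) - ?M $$ (a0, ?p a1) * ?M $$ (a1, ?p a0))"
  proof (rule leib2[OF M p a0k a1k a01])
    fix a b assume a: "a < k" and b: "b < k" and ne: "a \<noteq> a0" "a \<noteq> a1"
    have wJ: "pick ?J a \<in> ?J" using pick_in[of a ?J] a cJ by auto
    have wu: "pick ?J a \<noteq> u"
    proof
      assume "pick ?J a = u"
      then have "posI ?J (pick ?J a) = a0" by (simp add: a0_def)
      then show False using pos_pick[of a ?J] a cJ ne by auto
    qed
    have wv: "pick ?J a \<noteq> v"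
    proof
      assume "pick ?J a = v"
      then have "posI ?J (pick ?J a) = a1" by (simp add: a1_def)
      then show False using pos_pick[of a ?J] a cJ ne by auto
    qed
    then have wI: "pick ?J a \<in> I" using wJ wu Jeq by auto
    have pk: "posI I (pick ?J a) < k" using pos_lt[OF fI wI] I(2) by simp
    have "?M $$ (a, b) = C $$ (pick ?J a, b)" by (rule sub_index[OF C JS cJ a b])
    also have "\<dots> = C $$ (pick I (posI I (pick ?J a)), b)" using pick_pos[OF wI] by simp
    also have "\<dots> = (if posI I (pick ?J a) = b then 1 else 0)" using Cid[OF pk b] .
    also have "posI I (pick ?J a) = ?p a" unfolding sp using a wu wv by (simp add: \<phi>_def)
    finally show "?M $$ (a, b) = (if b = ?p a then 1 else 0)" by auto
  qed
  also have "?p a0 = posI I x" unfolding sp using a0k pa0 by (simp add: \<phi>_def)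
  also have "?p a1 = posI I y" unfolding sp using a1k pa1 uv by (simp add: \<phi>_def)
  also have "?M $$ (a0, posI I x) = C $$ (u, posI I x)"
    using sub_index[OF C JS cJ a0k, of "posI I x"] pa0 pos_lt[OF fI x] I(2) by simp
  also have "?M $$ (a1, posI I y) = C $$ (v, posI I y)"
    using sub_index[OF C JS cJ a1k, of "posI I y"] pa1 pos_lt[OF fI y] I(2) by simp
  also have "?M $$ (a0, posI I y) = C $$ (u, posI I y)"
    using sub_index[OF C JS cJ a0k, of "posI I y"] pa0 pos_lt[OF fI y] I(2) by simp
  also have "?M $$ (a1, posI I x) = C $$ (v, posI I x)"
    using sub_index[OF C JS cJ a1k, of "posI I x"] pa1 pos_lt[OF fI x] I(2) by simp
  finally show ?thesis .
qed



lemma swap1_ks: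
  assumes I: "I \<in> ksubsets k n" and x: "x \<in> I" and u: "u \<in> {0..<n} - I"
  shows "swap1 I x u \<in> ksubsets k n"
proof -
  have IS: "I \<subseteq> {0..<n}" and c: "card I = k" using I by (auto simp: ksubsets_def)
  have fI: "finite I" using IS finite_subset by blast
  have k0: "k > 0" using x fI c card_gt_0_iff by blast
  have "swap1 I x u = insert u (I - {x})" by (simp add: swap1_def)
  then show ?thesis using IS c fI x u k0 by (auto simp: ksubsets_def card_Diff_singleton)
qed

lemma swap2_ks:
  assumes I: "I \<in> ksubsets k n" and x: "x \<in> I" and y: "y \<in> I" and xy: "x \<noteq> y"
    and u: "u \<in> {0..<n} - I" and v: "v \<in> {0..<n} - I" and uv: "u \<noteq> v"
  shows "swap2 I x y u v \<in> ksubsets k n"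
proof -
  have IS: "I \<subseteq> {0..<n}" and c: "card I = k" using I by (auto simp: ksubsets_def)
  have fI: "finite I" using IS finite_subset by blast
  have Jeq: "swap2 I x y u v = insert u (insert v (I - {x, y}))" by (auto simp: swap2_def)
  have k2: "card (I - {x,y}) = k - 2" using x y xy fI c by (simp add: card_Diff_subset)
  have kk: "k \<ge> 2"
  proof -
    have "{x,y} \<subseteq> I" using x y by auto
    then have "card {x,y} \<le> card I" using fI card_mono by blast
    then show ?thesis using xy c by simp
  qed
  have "card (swap2 I x y u v) = k" using Jeq u v uv fI k2 kk by simp
  moreover have "swap2 I x y u v \<subseteq> {0..<n}" using Jeq IS u v by auto
  ultimately show ?thesis by (simp add: ksubsets_def)
qed

lemma transpose_submatrix:
  assumes that: "J \<subseteq> {0..<dim_col L}"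
  shows "transpose_mat (submatrix L UNIV J) = submatrix (transpose_mat L) J UNIV"
proof (rule eq_matI)
  show "dim_row (transpose_mat (submatrix L UNIV J)) = dim_row (submatrix (transpose_mat L) J UNIV)"
    by (simp add: dim_submatrix)
  show "dim_col (transpose_mat (submatrix L UNIV J)) = dim_col (submatrix (transpose_mat L) J UNIV)"
    by (simp add: dim_submatrix)
  fix i j assume i: "i < dim_row (submatrix (transpose_mat L) J UNIV)" and j: "j < dim_col (submatrix (transpose_mat L) J UNIV)"
  have i': "i < card {i. i < dim_col L \<and> i \<in> J}" using i by (simp add: dim_submatrix)
  have j': "j < card {i. i < dim_row L \<and> i \<in> UNIV}" using j by (simp add: dim_submatrix)
  have "transpose_mat (submatrix L UNIV J) $$ (i, j) = submatrix L UNIV J $$ (j, i)"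
    using i' j' by (simp add: dim_submatrix)
  also have "\<dots> = L $$ (pick UNIV j, pick J i)" by (rule submatrix_index) (use i' j' in auto)
  also have "\<dots> = transpose_mat L $$ (pick J i, pick UNIV j)"
  proof -
    have "pick UNIV j < dim_row L" using j' by (simp add: pick_UNIV)
    moreover have "pick J i < dim_col L"
    proof -
      have "pick {i. i < dim_col L \<and> i \<in> J} i \<in> {i. i < dim_col L \<and> i \<in> J}" using pick_in i' by blast
      moreover have "{i. i < dim_col L \<and> i \<in> J} = J" using that by auto
      ultimately show ?thesis by auto
    qed
    ultimately show ?thesis by simp
  qed
  also have "\<dots> = submatrix (transpose_mat L) J UNIV $$ (i, j)"
    by (rule submatrix_index[symmetric]) (use i' j' in auto)
  finally show "transpose_mat (submatrix L UNIV J) $$ (i, j) = submatrix (transpose_mat L) J UNIV $$ (i, j)" .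
qed


lemma colMinor_rowMinor:
  assumes L: "L \<in> carrier_mat k n" and J: "J \<subseteq> {0..<n}" "card J = k"
  shows "colMinor L J = rowMinor (transpose_mat L) J"
proof -
  have S: "submatrix L UNIV J \<in> carrier_mat k k"
  proof -
    have "dim_col (submatrix L UNIV J) = k" unfolding dim_submatrix(2) using L card_J_lt[OF J(1)] J(2) by auto
    moreover have "dim_row (submatrix L UNIV J) = k" unfolding dim_submatrix(1) using L by auto
    ultimately show ?thesis by auto
  qed
  have "colMinor L J = det (transpose_mat (submatrix L UNIV J))"
    unfolding colMinor_def using det_transpose[OF S] by simp
  also have "\<dots> = rowMinor (transpose_mat L) J"
    unfolding rowMinor_def using transpose_submatrix[of J L] J L by simp
  finally show ?thesis .
qed



lemma signof_sq: "(signof p :: 'a::comm_ring_1) * signof p = 1"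
  using signof_pm_one[of p] by (auto simp: sign_def)

lemma rep:
  fixes R :: "'a::field mat"
  assumes R: "R \<in> carrier_mat n k" and I: "I \<in> ksubsets k n" and nz: "rowMinor R I \<noteq> 0"
  obtains rh where
    "\<And>x u. x \<in> I \<Longrightarrow> u \<in> {0..<n} - I \<Longrightarrow> rowMinor R (swap1 I x u) = signof (sp1 I x u) * rh u x * rowMinor R I"
    "\<And>x y u v. x \<in> I \<Longrightarrow> y \<in> I \<Longrightarrow> x \<noteq> y \<Longrightarrow> u \<in> {0..<n} - I \<Longrightarrow> v \<in> {0..<n} - I \<Longrightarrow> u \<noteq> v \<Longrightarrow>
       rowMinor R (swap2 I x y u v) = signof (sp2 I x y u v) * (rh u x * rh v y - rh u y * rh v x) * rowMinor R I"
proof -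
  have IS: "I \<subseteq> {0..<n}" and c: "card I = k" using I by (auto simp: ksubsets_def)
  have dB: "det (submatrix R I UNIV) \<noteq> 0" using nz by (simp add: rowMinor_def)
  define B where "B = submatrix R I UNIV"
  define C where "C = (1 / det B) \<cdot>\<^sub>m (R * adj_mat B)"
  note red = reduce[OF R IS c dB, folded B_def, folded C_def]
  have dBI: "det B = rowMinor R I" by (simp add: B_def rowMinor_def)
  show ?thesis
  proof (rule that[of "\<lambda>u x. C $$ (u, posI I x)"])
    fix x u assume x: "x \<in> I" and u: "u \<in> {0..<n} - I"
    have J: "swap1 I x u \<in> ksubsets k n" using swap1_ks[OF I x u] .
    then have "rowMinor R (swap1 I x u) = det (submatrix C (swap1 I x u) UNIV) * det B"
      using red(2) by (auto simp: ksubsets_def)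
    also have "det (submatrix C (swap1 I x u) UNIV) = signof (sp1 I x u) * C $$ (u, posI I x)"
      by (rule minor1[OF red(1) IS c x u red(3)])
    finally show "rowMinor R (swap1 I x u) = signof (sp1 I x u) * C $$ (u, posI I x) * rowMinor R I"
      using dBI by simp
  next
    fix x y u v assume x: "x \<in> I" and y: "y \<in> I" and xy: "x \<noteq> y" and u: "u \<in> {0..<n} - I"
      and v: "v \<in> {0..<n} - I" and uv: "u \<noteq> v"
    have J: "swap2 I x y u v \<in> ksubsets k n" using swap2_ks[OF I x y xy u v uv] .
    then have "rowMinor R (swap2 I x y u v) = det (submatrix C (swap2 I x y u v) UNIV) * det B"
      using red(2) by (auto simp: ksubsets_def)
    also have "det (submatrix C (swap2 I x y u v) UNIV) = signof (sp2 I x y u v) *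
     (C $$ (u, posI I x) * C $$ (v, posI I y) - C $$ (u, posI I y) * C $$ (v, posI I x))"
      by (rule minor2[OF red(1) IS c x y xy u v uv red(3)])
    finally show "rowMinor R (swap2 I x y u v) = signof (sp2 I x y u v) *
     (C $$ (u, posI I x) * C $$ (v, posI I y) - C $$ (u, posI I y) * C $$ (v, posI I x)) * rowMinor R I"
      using dBI by simp
  qed
qed

lemma hvals:
  fixes L R :: "'a::field mat"
  assumes L: "L \<in> carrier_mat k n" and R: "R \<in> carrier_mat n k" and I: "I \<in> ksubsets k n"
    and nzR: "rowMinor R I \<noteq> 0" and nzL: "colMinor L I \<noteq> 0"
  obtains lm rh where
    "\<And>x u. x \<in> I \<Longrightarrow> u \<in> {0..<n} - I \<Longrightarrow> rowMinor R (swap1 I x u) = signof (sp1 I x u) * rh u x * rowMinor R I"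
    "\<And>x u. x \<in> I \<Longrightarrow> u \<in> {0..<n} - I \<Longrightarrow> hprod L R (swap1 I x u) = lm u x * rh u x * hprod L R I"
    "\<And>x y u v. x \<in> I \<Longrightarrow> y \<in> I \<Longrightarrow> x \<noteq> y \<Longrightarrow> u \<in> {0..<n} - I \<Longrightarrow> v \<in> {0..<n} - I \<Longrightarrow> u \<noteq> v \<Longrightarrow>
       hprod L R (swap2 I x y u v) = (lm u x * lm v y - lm u y * lm v x) * (rh u x * rh v y - rh u y * rh v x) * hprod L R I"
proof -
  have IS: "I \<subseteq> {0..<n}" and c: "card I = k" using I by (auto simp: ksubsets_def)
  have LT: "transpose_mat L \<in> carrier_mat n k" using L by simp
  have cr: "colMinor L J = rowMinor (transpose_mat L) J" if "J \<in> ksubsets k n" for J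
    using colMinor_rowMinor[OF L] that by (auto simp: ksubsets_def)
  obtain rh where r1: "\<And>x u. x \<in> I \<Longrightarrow> u \<in> {0..<n} - I \<Longrightarrow> rowMinor R (swap1 I x u) = signof (sp1 I x u) * rh u x * rowMinor R I"
    and r2: "\<And>x y u v. x \<in> I \<Longrightarrow> y \<in> I \<Longrightarrow> x \<noteq> y \<Longrightarrow> u \<in> {0..<n} - I \<Longrightarrow> v \<in> {0..<n} - I \<Longrightarrow> u \<noteq> v \<Longrightarrow>
       rowMinor R (swap2 I x y u v) = signof (sp2 I x y u v) * (rh u x * rh v y - rh u y * rh v x) * rowMinor R I"
    using rep[OF R I nzR] by blast
  have nzLT: "rowMinor (transpose_mat L) I \<noteq> 0" using nzL cr I by simp
  obtain lm where l1: "\<And>x u. x \<in> I \<Longrightarrow> u \<in> {0..<n} - I \<Longrightarrow> rowMinor (transpose_mat L) (swap1 I x u) = signof (sp1 I x u) * lm u x * rowMinor (transpose_mat L) I"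
    and l2: "\<And>x y u v. x \<in> I \<Longrightarrow> y \<in> I \<Longrightarrow> x \<noteq> y \<Longrightarrow> u \<in> {0..<n} - I \<Longrightarrow> v \<in> {0..<n} - I \<Longrightarrow> u \<noteq> v \<Longrightarrow>
       rowMinor (transpose_mat L) (swap2 I x y u v) = signof (sp2 I x y u v) * (lm u x * lm v y - lm u y * lm v x) * rowMinor (transpose_mat L) I"
    using rep[OF LT I nzLT] by blast
  show ?thesis
  proof (rule that)
    show "rowMinor R (swap1 I x u) = signof (sp1 I x u) * rh u x * rowMinor R I" if "x \<in> I" "u \<in> {0..<n} - I" for x u
      by (rule r1[OF that])
    show "hprod L R (swap1 I x u) = lm u x * rh u x * hprod L R I" if x: "x \<in> I" and u: "u \<in> {0..<n} - I" for x u
    proof -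
      have J: "swap1 I x u \<in> ksubsets k n" using swap1_ks[OF I x u] .
      have "hprod L R (swap1 I x u) = (signof (sp1 I x u) * signof (sp1 I x u)) * (lm u x * rh u x * (rowMinor (transpose_mat L) I * rowMinor R I))"
        unfolding hprod_def cr[OF J] l1[OF x u] r1[OF x u] by (simp add: ac_simps)
      then show ?thesis unfolding signof_sq hprod_def cr[OF I] by simp
    qed
    show "hprod L R (swap2 I x y u v) = (lm u x * lm v y - lm u y * lm v x) * (rh u x * rh v y - rh u y * rh v x) * hprod L R I"
      if x: "x \<in> I" and y: "y \<in> I" and xy: "x \<noteq> y" and u: "u \<in> {0..<n} - I" and v: "v \<in> {0..<n} - I" and uv: "u \<noteq> v" for x y u v
    proof -
      have J: "swap2 I x y u v \<in> ksubsets k n" using swap2_ks[OF I x y xy u v uv] .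
      have "hprod L R (swap2 I x y u v) = (signof (sp2 I x y u v) * signof (sp2 I x y u v)) *
         ((lm u x * lm v y - lm u y * lm v x) * (rh u x * rh v y - rh u y * rh v x) * (rowMinor (transpose_mat L) I * rowMinor R I))"
        unfolding hprod_def cr[OF J] l2[OF x y xy u v uv] r2[OF x y xy u v uv] by (simp add: ac_simps)
      then show ?thesis unfolding signof_sq hprod_def cr[OF I] by simp
    qed
  qed
qed

lemma Fpoly_factor:
  fixes h :: "nat set \<Rightarrow> 'a::field"
  assumes s1: "h (swap1 I x u) = l u x * r u x * h I" "h (swap1 I x v) = l v x * r v x * h I"
      "h (swap1 I y u) = l u y * r u y * h I" "h (swap1 I y v) = l v y * r v y * h I"
    and s2: "h (swap2 I x y u v) = (l u x * l v y - l u y * l v x) * (r u x * r v y - r u y * r v x) * h I"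
  shows "Fpoly h I x y u v X = h I * h I * (l v x * l u y * X + l u x * l v y) * (r v x * r u y * X + r u x * r v y)"
  unfolding Fpoly_def Acoef_def s1 s2 by (simp add: algebra_simps power2_eq_square)



lemma mult_eq_0E:
  fixes a b :: "'a::field"
  assumes "a * b = 0" obtains "a = 0" | "b = 0"
  using assms by auto

lemma cancelD:
  fixes a b c d D :: "'a::field"
  assumes "D \<noteq> 0"
  shows "(a * D * (b * D)) / (c * D * (d * D)) = (a * b) / (c * d)"
proof -
  have "(a * D * (b * D)) = (a * b) * (D * D)" "(c * D * (d * D)) = (c * d) * (D * D)" by (simp_all add: ac_simps)
  moreover have "D * D \<noteq> 0" using assms by simp
  ultimately show ?thesis by simp
qed

lemma cancelD2:
  fixes g a b c d D :: "'a::field"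
  assumes "D \<noteq> 0"
  shows "g * (a * D * (b * D)) / (c * D * (d * D)) = g * (a * b) / (c * d)"
proof -
  have "g * (a * D * (b * D)) = (g * (a * b)) * (D * D)" "(c * D * (d * D)) = (c * d) * (D * D)" by (simp_all add: ac_simps)
  moreover have "D * D \<noteq> 0" using assms by simp
  ultimately show ?thesis by simp
qed

lemma regroup4:
  fixes g s1 s2 s3 s4 r1 r2 r3 r4 :: "'a::field"
  shows "g * (s1 * r1 * (s2 * r2)) / (s3 * r3 * (s4 * r4)) = (g * (s1 * s2) / (s3 * s4)) * (r1 * r2 / (r3 * r4))"
proof -
  have "g * (s1 * r1 * (s2 * r2)) / (s3 * r3 * (s4 * r4)) = (g * (s1 * s2) * (r1 * r2)) / ((s3 * s4) * (r3 * r4))"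
    by (simp add: ac_simps)
  also have "\<dots> = (g * (s1 * s2) / (s3 * s4)) * (r1 * r2 / (r3 * r4))" by (rule times_divide_times_eq[symmetric])
  finally show ?thesis .
qed

lemma Yterm_factor:
  fixes R :: "'a::field mat"
  assumes r1: "\<And>x u. x \<in> I \<Longrightarrow> u \<in> {0..<n} - I \<Longrightarrow> rowMinor R (swap1 I x u) = signof (sp1 I x u) * \<rho> u x * rowMinor R I"
    and nz: "rowMinor R I \<noteq> 0"
    and x: "x \<in> I" and y: "y \<in> I" and u: "u \<in> {0..<n} - I" and v: "v \<in> {0..<n} - I"
  shows "Yterm R I x y u v = (- of_int (sgn ((int x - int u) * (int x - int v) * (int y - int u) * (int y - int v)))
      * (signof (sp1 I x u) * signof (sp1 I y v)) / (signof (sp1 I x v) * signof (sp1 I y u))) * crr \<rho> x y u v"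
proof -
  let ?g = "- of_int (sgn ((int x - int u) * (int x - int v) * (int y - int u) * (int y - int v))) :: 'a"
  let ?D = "rowMinor R I"
  have "Yterm R I x y u v = ?g * ((signof (sp1 I x u) * \<rho> u x * ?D) * (signof (sp1 I y v) * \<rho> v y * ?D))
      / ((signof (sp1 I x v) * \<rho> v x * ?D) * (signof (sp1 I y u) * \<rho> u y * ?D))"
    unfolding Yterm_def r1[OF x u] r1[OF y v] r1[OF x v] r1[OF y u] by (rule refl)
  also have "\<dots> = ?g * ((signof (sp1 I x u) * \<rho> u x) * (signof (sp1 I y v) * \<rho> v y))
      / ((signof (sp1 I x v) * \<rho> v x) * (signof (sp1 I y u) * \<rho> u y))"
    by (rule cancelD2[OF nz])
  also have "\<dots> = (?g * (signof (sp1 I x u) * signof (sp1 I y v)) / (signof (sp1 I x v) * signof (sp1 I y u))) * crr \<rho> x y u v"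
    unfolding crr_def by (rule regroup4)
  finally show ?thesis .
qed

lemma sgn_fac_nz:
  fixes x y u v :: nat
  assumes "x \<noteq> u" "x \<noteq> v" "y \<noteq> u" "y \<noteq> v"
  shows "(- of_int (sgn ((int x - int u) * (int x - int v) * (int y - int u) * (int y - int v)))
      * (signof p1 * signof p2) / (signof p3 * signof p4) :: 'a::field) \<noteq> 0"
proof -
  have z: "(int x - int u) * (int x - int v) * (int y - int u) * (int y - int v) \<noteq> 0" using assms by auto
  then have "sgn ((int x - int u) * (int x - int v) * (int y - int u) * (int y - int v)) \<in> {1, -1}"
    by (auto simp: sgn_if)
  then have a: "(of_int (sgn ((int x - int u) * (int x - int v) * (int y - int u) * (int y - int v))) :: 'a) \<noteq> 0" by auto
  have s: "(signof p :: 'a) \<noteq> 0" for p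
  proof -
    have "sign p = (1::int) \<or> sign p = -1" by (simp add: sign_def)
    then show ?thesis by (elim disjE) simp_all
  qed
  show ?thesis using a s[of p1] s[of p2] s[of p3] s[of p4] by simp
qed

theorem mainTheorem17:
  fixes L R L' R' :: "'a::field mat" and k n :: nat and I :: "nat set"
    and i j \<alpha> \<beta> :: nat
  assumes L: "L \<in> carrier_mat k n" and R: "R \<in> carrier_mat n k"
    and L': "L' \<in> carrier_mat k n" and R': "R' \<in> carrier_mat n k"
    and Rnz: "\<forall>J\<in>ksubsets k n. rowMinor R J \<noteq> 0"
    and R'nz: "\<forall>J\<in>ksubsets k n. rowMinor R' J \<noteq> 0"
    and hsame: "\<forall>J\<in>ksubsets k n. hprod L R J = hprod L' R' J"
    and I: "I \<in> ksubsets k n" and hI: "hprod L R I \<noteq> 0"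
    and ij: "i \<in> I" "j \<in> I" "i \<noteq> j"
    and \<alpha>\<beta>: "\<alpha> \<in> {0..<n} - I" "\<beta> \<in> {0..<n} - I" "\<alpha> \<noteq> \<beta>"
    and obs: "observable (chi (hprod L R) I i j \<alpha> \<beta>)"
    and roots: "\<exists>x y. x \<noteq> y \<and> Fpoly (hprod L R) I i j \<alpha> \<beta> x = 0
                          \<and> Fpoly (hprod L R) I i j \<alpha> \<beta> y = 0"
    and Yeq: "Yterm R I i j \<alpha> \<beta> = Yterm R' I i j \<alpha> \<beta>"
  shows "\<forall>l m \<gamma> \<delta>. l \<in> I \<and> m \<in> I \<and> l \<noteq> m \<and> \<gamma> \<in> {0..<n} - I \<and> \<delta> \<in> {0..<n} - I
           \<and> \<gamma> \<noteq> \<delta> \<and> observable (chi (hprod L R) I l m \<gamma> \<delta>)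
           \<longrightarrow> Yterm R I l m \<gamma> \<delta> = Yterm R' I l m \<gamma> \<delta>"

proof -
  let ?O = "{0..<n} - I"
  have IS: "I \<subseteq> {0..<n}" and c: "card I = k" using I by (auto simp: ksubsets_def)
  have nzR: "rowMinor R I \<noteq> 0" using Rnz I by blast
  have nzR': "rowMinor R' I \<noteq> 0" using R'nz I by blast
  have nzL: "colMinor L I \<noteq> 0" using hI by (simp add: hprod_def)
  have hI': "hprod L' R' I = hprod L R I" using bspec[OF hsame I] by simp
  have "colMinor L' I * rowMinor R' I \<noteq> 0" using hI hI' unfolding hprod_def by simp
  then have nzL': "colMinor L' I \<noteq> 0" by auto
  obtain lm rh where Rr1: "\<And>x u. x \<in> I \<Longrightarrow> u \<in> ?O \<Longrightarrow> rowMinor R (swap1 I x u) = signof (sp1 I x u) * rh u x * rowMinor R I"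
    and h1: "\<And>x u. x \<in> I \<Longrightarrow> u \<in> ?O \<Longrightarrow> hprod L R (swap1 I x u) = lm u x * rh u x * hprod L R I"
    and h2: "\<And>x y u v. x \<in> I \<Longrightarrow> y \<in> I \<Longrightarrow> x \<noteq> y \<Longrightarrow> u \<in> ?O \<Longrightarrow> v \<in> ?O \<Longrightarrow> u \<noteq> v \<Longrightarrow>
       hprod L R (swap2 I x y u v) = (lm u x * lm v y - lm u y * lm v x) * (rh u x * rh v y - rh u y * rh v x) * hprod L R I"
    by (rule hvals[OF L R I nzR nzL], rule that, assumption+)
  obtain lm' rh' where Rr1': "\<And>x u. x \<in> I \<Longrightarrow> u \<in> ?O \<Longrightarrow> rowMinor R' (swap1 I x u) = signof (sp1 I x u) * rh' u x * rowMinor R' I"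
    and h1': "\<And>x u. x \<in> I \<Longrightarrow> u \<in> ?O \<Longrightarrow> hprod L' R' (swap1 I x u) = lm' u x * rh' u x * hprod L' R' I"
    and h2': "\<And>x y u v. x \<in> I \<Longrightarrow> y \<in> I \<Longrightarrow> x \<noteq> y \<Longrightarrow> u \<in> ?O \<Longrightarrow> v \<in> ?O \<Longrightarrow> u \<noteq> v \<Longrightarrow>
       hprod L' R' (swap2 I x y u v) = (lm' u x * lm' v y - lm' u y * lm' v x) * (rh' u x * rh' v y - rh' u y * rh' v x) * hprod L' R' I"
    by (rule hvals[OF L' R' I nzR' nzL'], rule that, assumption+)
  let ?h = "hprod L R I"
  have rnz: "rh u x \<noteq> 0" if "x \<in> I" "u \<in> ?O" for x u
  proof
    assume "rh u x = 0"
    then have "rowMinor R (swap1 I x u) = 0" using Rr1[OF that] by simp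
    then show False using Rnz swap1_ks[OF I that] by blast
  qed
  have rnz': "rh' u x \<noteq> 0" if "x \<in> I" "u \<in> ?O" for x u
  proof
    assume "rh' u x = 0"
    then have "rowMinor R' (swap1 I x u) = 0" using Rr1'[OF that] by simp
    then show False using R'nz swap1_ks[OF I that] by blast
  qed
  have FL: "Fpoly (hprod L R) I x y u v X = ?h * ?h * (lm v x * lm u y * X + lm u x * lm v y) * (rh v x * rh u y * X + rh u x * rh v y)"
    if q: "x \<in> I" "y \<in> I" "x \<noteq> y" "u \<in> ?O" "v \<in> ?O" "u \<noteq> v" for x y u v X
    by (rule Fpoly_factor) (use h1 h2 q in auto)
  have FL': "Fpoly (hprod L R) I x y u v X = ?h * ?h * (lm' v x * lm' u y * X + lm' u x * lm' v y) * (rh' v x * rh' u y * X + rh' u x * rh' v y)"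
    if q: "x \<in> I" "y \<in> I" "x \<noteq> y" "u \<in> ?O" "v \<in> ?O" "u \<noteq> v" for x y u v X
  proof -
    have e: "hprod L R J = hprod L' R' J" if "J \<in> ksubsets k n" for J using hsame that by blast
    have "Fpoly (hprod L R) I x y u v X = Fpoly (hprod L' R') I x y u v X"
      unfolding Fpoly_def Acoef_def
      using e[OF I] e[OF swap1_ks[OF I q(1) q(4)]] e[OF swap1_ks[OF I q(1) q(5)]]
        e[OF swap1_ks[OF I q(2) q(4)]] e[OF swap1_ks[OF I q(2) q(5)]] e[OF swap2_ks[OF I q]] by simp
    also have "\<dots> = hprod L' R' I * hprod L' R' I * (lm' v x * lm' u y * X + lm' u x * lm' v y) * (rh' v x * rh' u y * X + rh' u x * rh' v y)"
      by (rule Fpoly_factor) (use h1' h2' q in auto)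
    finally show ?thesis using hI' by simp
  qed
  have hnz: "?h \<noteq> 0" using hI .
  have obs_L: "obsL lm x y u v" if q: "x \<in> I" "y \<in> I" "x \<noteq> y" "u \<in> ?O" "v \<in> ?O" "u \<noteq> v"
    and ob: "observable (chi (hprod L R) I x y u v)" for x y u v
  proof (rule ccontr)
    assume no: "\<not> obsL lm x y u v"
    then have z: "lm u x * lm v y = 0" "lm v x * lm u y = 0" by (auto simp: obsL_def)
    have z2: "lm u y * lm v x = 0" using z(2) by (simp only: mult.commute)
    have d: "lm u x * lm v y - lm u y * lm v x = 0" unfolding z(1) z2 by simp
    have "hprod L R (swap2 I x y u v) = 0" using h2[OF q] d by simp
    then have "hprod L R I * hprod L R (swap2 I x y u v) = 0" by simp
    moreover have "hprod L R (swap1 I x u) * hprod L R (swap1 I y v) = 0"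
      unfolding h1[OF q(1) q(4)] h1[OF q(2) q(5)] using z(1) by auto
    moreover have "hprod L R (swap1 I x v) * hprod L R (swap1 I y u) = 0"
      unfolding h1[OF q(1) q(5)] h1[OF q(2) q(4)] using z(2) by auto
    ultimately show False using ob by (simp add: observable_def chi_def)
  qed
  interpret C: core rh rh' lm I ?O
  proof
    show "rh u x \<noteq> 0" if "x \<in> I" "u \<in> ?O" for x u using rnz that .
    show "rh' u x \<noteq> 0" if "x \<in> I" "u \<in> ?O" for x u using rnz' that .
    fix x y u v assume q: "x \<in> I" "y \<in> I" "x \<noteq> y" "u \<in> ?O" "v \<in> ?O" "u \<noteq> v" and ob: "obsL lm x y u v"
    let ?P' = "crr rh' x y u v"
    have nz': "rh' u x \<noteq> 0" "rh' v y \<noteq> 0" "rh' v x \<noteq> 0" "rh' u y \<noteq> 0" using rnz' q by auto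
    have nz: "rh u x \<noteq> 0" "rh v y \<noteq> 0" "rh v x \<noteq> 0" "rh u y \<noteq> 0" using rnz q by auto
    have "rh' v x * rh' u y * (- ?P') + rh' u x * rh' v y = 0" using nz' by (simp add: crr_def field_simps)
    then have "Fpoly (hprod L R) I x y u v (- ?P') = 0" using FL'[OF q] by simp
    then have "(lm v x * lm u y * (- ?P') + lm u x * lm v y) * (rh v x * rh u y * (- ?P') + rh u x * rh v y) = 0"
      using FL[OF q] hnz by simp
    then show "crr rh' x y u v = crr rh x y u v \<or> (fullL lm x y u v \<and> crr rh' x y u v = crr lm x y u v)"
    proof (elim mult_eq_0E)
      assume "rh v x * rh u y * (- ?P') + rh u x * rh v y = 0"
      then have "?P' = crr rh x y u v" using nz by (simp add: crr_def field_simps)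
      then show ?thesis by simp
    next
      assume a: "lm v x * lm u y * (- ?P') + lm u x * lm v y = 0"
      have Pnz: "?P' \<noteq> 0" using nz' by (simp add: crr_def)
      show ?thesis
      proof (cases "lm v x * lm u y = 0")
        case True
        then have "lm u x * lm v y = 0" using a by simp
        then show ?thesis using True ob by (auto simp: obsL_def)
      next
        case False
        then have "?P' = lm u x * lm v y / (lm v x * lm u y)" using a by (simp add: field_simps)
        moreover have "lm u x * lm v y \<noteq> 0" using a False Pnz by auto
        ultimately show ?thesis using False by (auto simp: fullL_def crr_def)
      qed
    qed
  qed
  have q0: "i \<in> I" "j \<in> I" "i \<noteq> j" "\<alpha> \<in> ?O" "\<beta> \<in> ?O" "\<alpha> \<noteq> \<beta>" using ij \<alpha>\<beta> by auto
  have Kfac: "\<exists>K. K \<noteq> 0 \<and> Yterm R I x y u v = K * crr rh x y u v \<and> Yterm R' I x y u v = K * crr rh' x y u v"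
    if q: "x \<in> I" "y \<in> I" "u \<in> ?O" "v \<in> ?O" for x y u v
  proof -
    have d: "x \<noteq> u" "x \<noteq> v" "y \<noteq> u" "y \<noteq> v" using q by auto
    show ?thesis
      using Yterm_factor[OF Rr1 nzR q] Yterm_factor[OF Rr1' nzR' q]
        sgn_fac_nz[OF d, of "sp1 I x u" "sp1 I y v" "sp1 I x v" "sp1 I y u"] by blast
  qed
  have eq0: "crr rh' i j \<alpha> \<beta> = crr rh i j \<alpha> \<beta>"
  proof -
    obtain K where K: "K \<noteq> 0" "Yterm R I i j \<alpha> \<beta> = K * crr rh i j \<alpha> \<beta>" "Yterm R' I i j \<alpha> \<beta> = K * crr rh' i j \<alpha> \<beta>"
      using Kfac q0 by blast
    then show ?thesis using Yeq by simp
  qed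
  have obs0: "obsL lm i j \<alpha> \<beta>" using obs_L[OF q0 obs] .
  have dist0: "crr lm i j \<alpha> \<beta> \<noteq> crr rh i j \<alpha> \<beta>" if full: "fullL lm i j \<alpha> \<beta>"
  proof
    assume E: "crr lm i j \<alpha> \<beta> = crr rh i j \<alpha> \<beta>"
    obtain x y where xy: "x \<noteq> y" "Fpoly (hprod L R) I i j \<alpha> \<beta> x = 0" "Fpoly (hprod L R) I i j \<alpha> \<beta> y = 0"
      using roots by blast
    have nz: "rh \<alpha> i \<noteq> 0" "rh \<beta> j \<noteq> 0" "rh \<beta> i \<noteq> 0" "rh \<alpha> j \<noteq> 0" using rnz q0 by auto
    have ln: "lm \<alpha> i \<noteq> 0" "lm \<beta> j \<noteq> 0" "lm \<beta> i \<noteq> 0" "lm \<alpha> j \<noteq> 0" using full by (auto simp: fullL_def)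
    have root: "z = - crr rh i j \<alpha> \<beta>" if "Fpoly (hprod L R) I i j \<alpha> \<beta> z = 0" for z
    proof -
      have "(lm \<beta> i * lm \<alpha> j * z + lm \<alpha> i * lm \<beta> j) * (rh \<beta> i * rh \<alpha> j * z + rh \<alpha> i * rh \<beta> j) = 0"
        using that FL[OF q0] hnz by simp
      then show ?thesis
      proof (elim mult_eq_0E)
        assume "rh \<beta> i * rh \<alpha> j * z + rh \<alpha> i * rh \<beta> j = 0"
        then show ?thesis using nz by (simp add: crr_def field_simps add_eq_0_iff2)
      next
        assume "lm \<beta> i * lm \<alpha> j * z + lm \<alpha> i * lm \<beta> j = 0"
        then have "z = - crr lm i j \<alpha> \<beta>" using ln by (simp add: crr_def field_simps add_eq_0_iff2)
        then show ?thesis using E by simp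
      qed
    qed
    show False using root[OF xy(2)] root[OF xy(3)] xy(1) by simp
  qed
  show ?thesis
  proof (intro allI impI)
    fix l m \<gamma> \<delta>
    assume t: "l \<in> I \<and> m \<in> I \<and> l \<noteq> m \<and> \<gamma> \<in> {0..<n} - I \<and> \<delta> \<in> {0..<n} - I \<and> \<gamma> \<noteq> \<delta> \<and> observable (chi (hprod L R) I l m \<gamma> \<delta>)"
    then have qt: "l \<in> I" "m \<in> I" "l \<noteq> m" "\<gamma> \<in> ?O" "\<delta> \<in> ?O" "\<gamma> \<noteq> \<delta>" by auto
    have obt: "obsL lm l m \<gamma> \<delta>" using obs_L[OF qt] t by blast
    have "crr rh' l m \<gamma> \<delta> = crr rh l m \<gamma> \<delta>"
      by (rule C.core_main[OF q0 obs0 eq0 dist0 qt obt])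
    moreover obtain K where "K \<noteq> 0" "Yterm R I l m \<gamma> \<delta> = K * crr rh l m \<gamma> \<delta>" "Yterm R' I l m \<gamma> \<delta> = K * crr rh' l m \<gamma> \<delta>"
      using Kfac qt by blast
    ultimately show "Yterm R I l m \<gamma> \<delta> = Yterm R' I l m \<gamma> \<delta>" by simp
  qed
qed


end
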